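(* In the setting and under standing assumptions (A) of the context, suppose additionally that $\mathcal W\subseteq\mathcal S$. Then $\|\Sigma\|\le BD$, $\Sigma$ is invertible with $\|\Sigma^{-1}\|\le\frac{1}{AC}$, and consequently $\|\Sigma\|\,\|\Sigma^{-1}\|\le\frac{BD}{AC}$. In particular, for every $f\in\mathcal H$ and $\delta\in(0,1)$, if \[ m\ge\frac{8}{3}\frac{BD}{A^2C^2}\,R\log(2n/\delta), \] then with probability at least $1-\delta$ the matrix $\widehat\Sigma_\Omega$ is invertible, the weighted least-squares problem $\operatorname{argmin}_{x\in\mathbb C^n}\sum_{t=1}^m p_{i_t}^{-1}|\langle W\iota_nx,s_{i_t}\rangle-\langle f,s_{i_t}\rangle|^2$ has a unique solution $\tilde x$, and $\tilde f:=W\iota_n\tilde x$ satisfies $\|f-\tilde f\|\le\|P_{\mathcal W_n^\perp}f\|(1+K_{n,\Omega}^2)^{1/2}$ with $K_{n,\Omega}:=\|W\iota_n\widehat\Sigma_\Omega^{-1}\widehat\Gamma_\Omega\|$.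
   Context: Let $\mathcal H$ be a separable complex Hilbert space, $\mathbb N=\{1,2,\dots\}$, and $\ell^2=\ell^2(\mathbb N)$ with canonical orthonormal basis $(e_j)_{j\in\mathbb N}$. For vectors $a,b$, $a\otimes b$ denotes the rank-one operator $x\mapsto\langle x,b\rangle a$. Let $\iota_n:\mathbb C^n\to\ell^2$, $\iota_n(x_1,\dots,x_n)=(x_1,\dots,x_n,0,0,\dots)$. Let $(s_k)_{k\in\mathbb N}\subset\mathcal H$ be a frame for its closed linear span $\mathcal S$: there are $0<A\le B$ with $A\|h\|^2\le\sum_k|\langle h,s_k\rangle|^2\le B\|h\|^2$ for all $h\in\mathcal S$. Let $(w_k)_{k\in\mathbb N}\subset\mathcal H$ be a Riesz basis for its closed linear span $\mathcal W$: there are $0<C\le D$ with $C\|x\|^2\le\|\sum_kx_kw_k\|^2\le D\|x\|^2$ for all $x\in\ell^2$. Synthesis operators $S,W:\ell^2\to\mathcal H$: $Sx=\sum_kx_ks_k$, $Wx=\sum_kx_kw_k$. Put $U:=S^*W$. Fix $n\in\mathbb N$, $\mathcal W_n:=\operatorname{span}\{w_1,\dots,w_n\}$, $P_{\mathcal W_n^\perp}$ the orthogonal projection onto $\mathcal W_n^\perp$. $\Sigma:=\iota_n^*U^*U\iota_n$, $v_j:=\iota_n^*U^*e_j$, $u_j:=P_{\mathcal W_n^\perp}s_j$. Let $p$ be a probability distribution on $\mathbb N$, $\operatorname{supp}(p)=\{j:p_j>0\}$, $R:=\sup_{j\in\operatorname{supp}(p)}\|v_j\|^2/p_j$, $R':=\sup_{j\in\operatorname{supp}(p)}\|u_j\|^2/p_j$.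 Let $i_1,\dots,i_m$ be i.i.d. with law $p$, $\Omega=\{i_1,\dots,i_m\}$, $Q_\Omega:=\frac1m\sum_{t=1}^m\frac{e_{i_t}\otimes e_{i_t}}{p_{i_t}}$, $\widehat\Sigma_\Omega:=\iota_n^*U^*Q_\Omega U\iota_n$, $\widehat\Gamma_\Omega:=\iota_n^*U^*Q_\Omega S^*P_{\mathcal W_n^\perp}$. Standing assumptions (A): (i) $\mathcal W\cap\mathcal S^\perp=\{0\}$; (ii) $R<\infty$, $R'<\infty$; (iii) $p_j>0$ whenever $v_j\neq0$. *)

theory Defs
  imports "HOL-Analysis.Analysis" "HOL-Probability.Probability"
begin

text \<open>HOL-Analysis only provides real inner product spaces, so we introduce complex
inner product spaces as a type class.  The inner product is linear in the FIRST
argument and conjugate-linear in the second (the convention of the paper, cf.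
(a \<otimes> b) x = <x,b> a), and the norm is the one induced by the inner product.
A complex Hilbert space is a type of this class that is also a complete_space.\<close>

class complex_inner = real_normed_vector +
  fixes scaleC :: "complex \<Rightarrow> 'a \<Rightarrow> 'a"  (infixr \<open>*\<^sub>C\<close> 75)
    and cinner :: "'a \<Rightarrow> 'a \<Rightarrow> complex"
  assumes scaleC_add_right: "a *\<^sub>C (x + y) = a *\<^sub>C x + a *\<^sub>C y"
    and scaleC_add_left: "(a + b) *\<^sub>C x = a *\<^sub>C x + b *\<^sub>C x"
    and scaleC_scaleC: "a *\<^sub>C (b *\<^sub>C x) = (a * b) *\<^sub>C x"
    and scaleC_one: "1 *\<^sub>C x = x"
    and scaleR_scaleC: "scaleR r x = complex_of_real r *\<^sub>C x"
    and cinner_add_left: "cinner (x + y) z = cinner x z + cinner y z"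
    and cinner_scaleC_left: "cinner (a *\<^sub>C x) y = a * cinner x y"
    and cinner_commute: "cinner x y = cnj (cinner y x)"
    and cinner_self_norm: "cinner x x = complex_of_real ((norm x)\<^sup>2)"


instantiation complex :: complex_inner
begin
definition scaleC_complex :: "complex \<Rightarrow> complex \<Rightarrow> complex" where
  "scaleC_complex a x = a * x"
definition cinner_complex :: "complex \<Rightarrow> complex \<Rightarrow> complex" where
  "cinner_complex x y = x * cnj y"
instance
proof
  fix a b :: complex and x y z :: complex and r :: real
  show "a *\<^sub>C (x + y) = a *\<^sub>C x + a *\<^sub>C y" by (simp add: scaleC_complex_def distrib_left)
  show "(a + b) *\<^sub>C x = a *\<^sub>C x + b *\<^sub>C x" by (simp add: scaleC_complex_def distrib_right)
  show "a *\<^sub>C (b *\<^sub>C x) = (a * b) *\<^sub>C x" by (simp add: scaleC_complex_def mult.assoc)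
  show "1 *\<^sub>C x = x" by (simp add: scaleC_complex_def)
  show "scaleR r x = complex_of_real r *\<^sub>C x" by (simp add: scaleC_complex_def scaleR_conv_of_real)
  show "cinner (x + y) z = cinner x z + cinner y z" by (simp add: cinner_complex_def distrib_right)
  show "cinner (a *\<^sub>C x) y = a * cinner x y" by (simp add: cinner_complex_def scaleC_complex_def mult.assoc)
  show "cinner x y = cnj (cinner y x)" by (simp add: cinner_complex_def mult.commute)
  show "cinner x x = complex_of_real ((norm x)\<^sup>2)" using complex_norm_square[of x] by (simp add: cinner_complex_def)
qed
end

definition cspan :: "'a::complex_inner set \<Rightarrow> 'a set" where
  "cspan X = {x. \<exists>F c. finite F \<and> F \<subseteq> X \<and> x = (\<Sum>v\<in>F. c v *\<^sub>C v)}"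

definition clspan :: "'a::complex_inner set \<Rightarrow> 'a set" where
  "clspan X = closure (cspan X)"

definition orth_comp :: "'a::complex_inner set \<Rightarrow> 'a set" where
  "orth_comp M = {x. \<forall>y\<in>M. cinner x y = 0}"

definition orth_proj :: "'a::complex_inner set \<Rightarrow> 'a \<Rightarrow> 'a" where
  "orth_proj M x = (THE y. y \<in> M \<and> x - y \<in> orth_comp M)"

section \<open>The sequence space l2(N) (N re-indexed from 0) and C^n inside it\<close>

definition l2 :: "(nat \<Rightarrow> complex) set" where
  "l2 = {x. summable (\<lambda>k. (cmod (x k))\<^sup>2)}"

definition l2norm :: "(nat \<Rightarrow> complex) \<Rightarrow> real" where
  "l2norm x = sqrt (\<Sum>k. (cmod (x k))\<^sup>2)"

text \<open>C^n, realised as the sequences supported on {0..<n}, with its Euclidean norm\<close>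
definition Cn :: "nat \<Rightarrow> (nat \<Rightarrow> complex) set" where
  "Cn n = {y. \<forall>k\<ge>n. y k = 0}"

definition cnorm :: "nat \<Rightarrow> (nat \<Rightarrow> complex) \<Rightarrow> real" where
  "cnorm n y = sqrt (\<Sum>k<n. (cmod (y k))\<^sup>2)"

definition mat_norm :: "nat \<Rightarrow> ((nat \<Rightarrow> complex) \<Rightarrow> (nat \<Rightarrow> complex)) \<Rightarrow> real" where
  "mat_norm n T = Sup ((\<lambda>y. cnorm n (T y)) ` {y \<in> Cn n. cnorm n y = 1})"

definition iota :: "nat \<Rightarrow> (nat \<Rightarrow> complex) \<Rightarrow> (nat \<Rightarrow> complex)" where
  "iota n y = (\<lambda>k. if k < n then y k else 0)"

definition iota_adj :: "nat \<Rightarrow> (nat \<Rightarrow> complex) \<Rightarrow> (nat \<Rightarrow> complex)" where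
  "iota_adj n x = (\<lambda>k. if k < n then x k else 0)"

definition e :: "nat \<Rightarrow> nat \<Rightarrow> complex" where
  "e j = (\<lambda>k. if k = j then 1 else 0)"

definition synth :: "(nat \<Rightarrow> 'a::complex_inner) \<Rightarrow> (nat \<Rightarrow> complex) \<Rightarrow> 'a" where
  "synth s x = (\<Sum>k. x k *\<^sub>C s k)"

definition anal :: "(nat \<Rightarrow> 'a::complex_inner) \<Rightarrow> 'a \<Rightarrow> (nat \<Rightarrow> complex)" where
  "anal s h = (\<lambda>k. cinner h (s k))"

definition is_frame_for_span :: "(nat \<Rightarrow> 'a::complex_inner) \<Rightarrow> real \<Rightarrow> real \<Rightarrow> bool" where
  "is_frame_for_span s A B \<longleftrightarrow> 0 < A \<and> A \<le> B \<and>
     (\<forall>h\<in>clspan (range s). summable (\<lambda>k. (cmod (cinner h (s k)))\<^sup>2) \<and>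
        A * (norm h)\<^sup>2 \<le> (\<Sum>k. (cmod (cinner h (s k)))\<^sup>2) \<and>
        (\<Sum>k. (cmod (cinner h (s k)))\<^sup>2) \<le> B * (norm h)\<^sup>2)"

definition is_riesz_basis_for_span :: "(nat \<Rightarrow> 'a::complex_inner) \<Rightarrow> real \<Rightarrow> real \<Rightarrow> bool" where
  "is_riesz_basis_for_span w C D \<longleftrightarrow> 0 < C \<and> C \<le> D \<and>
     (\<forall>x\<in>l2. summable (\<lambda>k. x k *\<^sub>C w k) \<and>
        C * (l2norm x)\<^sup>2 \<le> (norm (synth w x))\<^sup>2 \<and>
        (norm (synth w x))\<^sup>2 \<le> D * (l2norm x)\<^sup>2)"

definition Uop :: "(nat \<Rightarrow> 'a::complex_inner) \<Rightarrow> (nat \<Rightarrow> 'a) \<Rightarrow> (nat \<Rightarrow> complex) \<Rightarrow> (nat \<Rightarrow> complex)" where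
  "Uop s w x = anal s (synth w x)"

definition Uadj :: "(nat \<Rightarrow> 'a::complex_inner) \<Rightarrow> (nat \<Rightarrow> 'a) \<Rightarrow> (nat \<Rightarrow> complex) \<Rightarrow> (nat \<Rightarrow> complex)" where
  "Uadj s w z = anal w (synth s z)"

definition Sigma :: "(nat \<Rightarrow> 'a::complex_inner) \<Rightarrow> (nat \<Rightarrow> 'a) \<Rightarrow> nat \<Rightarrow> (nat \<Rightarrow> complex) \<Rightarrow> (nat \<Rightarrow> complex)" where
  "Sigma s w n = iota_adj n \<circ> Uadj s w \<circ> Uop s w \<circ> iota n"

text \<open>orthogonal projection onto W_n^\<bottom>, W_n = span{w_1,...,w_n} (here w 0, ..., w (n-1))\<close>
definition Pperp :: "(nat \<Rightarrow> 'a::complex_inner) \<Rightarrow> nat \<Rightarrow> 'a \<Rightarrow> 'a" where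
  "Pperp w n = orth_proj (orth_comp (cspan (w ` {..<n})))"

definition vvec :: "(nat \<Rightarrow> 'a::complex_inner) \<Rightarrow> (nat \<Rightarrow> 'a) \<Rightarrow> nat \<Rightarrow> nat \<Rightarrow> (nat \<Rightarrow> complex)" where
  "vvec s w n j = iota_adj n (Uadj s w (e j))"

definition uvec :: "(nat \<Rightarrow> 'a::complex_inner) \<Rightarrow> (nat \<Rightarrow> 'a) \<Rightarrow> nat \<Rightarrow> nat \<Rightarrow> 'a" where
  "uvec s w n j = Pperp w n (s j)"

definition Rconst :: "(nat \<Rightarrow> 'a::complex_inner) \<Rightarrow> (nat \<Rightarrow> 'a) \<Rightarrow> nat \<Rightarrow> nat pmf \<Rightarrow> real" where
  "Rconst s w n p = (SUP j\<in>set_pmf p. (cnorm n (vvec s w n j))\<^sup>2 / pmf p j)"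

definition Rconst' :: "(nat \<Rightarrow> 'a::complex_inner) \<Rightarrow> (nat \<Rightarrow> 'a) \<Rightarrow> nat \<Rightarrow> nat pmf \<Rightarrow> real" where
  "Rconst' s w n p = (SUP j\<in>set_pmf p. (norm (uvec s w n j))\<^sup>2 / pmf p j)"

text \<open>Q_Omega = (1/m) \<Sum>_{t} (e_{i_t} \<otimes> e_{i_t}) / p_{i_t}; the sample i_1..i_m is
  given as a function om with om t = i_{t+1} for t < m\<close>
definition Qop :: "nat pmf \<Rightarrow> nat \<Rightarrow> (nat \<Rightarrow> nat) \<Rightarrow> (nat \<Rightarrow> complex) \<Rightarrow> (nat \<Rightarrow> complex)" where
  "Qop p m om z = (\<lambda>k. (1 / of_nat m) *
      (\<Sum>t<m. if om t = k then z k / complex_of_real (pmf p (om t)) else 0))"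

definition Sigma_hat :: "(nat \<Rightarrow> 'a::complex_inner) \<Rightarrow> (nat \<Rightarrow> 'a) \<Rightarrow> nat \<Rightarrow> nat pmf \<Rightarrow> nat \<Rightarrow> (nat \<Rightarrow> nat)
     \<Rightarrow> (nat \<Rightarrow> complex) \<Rightarrow> (nat \<Rightarrow> complex)" where
  "Sigma_hat s w n p m om = iota_adj n \<circ> Uadj s w \<circ> Qop p m om \<circ> Uop s w \<circ> iota n"

definition Gamma_hat :: "(nat \<Rightarrow> 'a::complex_inner) \<Rightarrow> (nat \<Rightarrow> 'a) \<Rightarrow> nat \<Rightarrow> nat pmf \<Rightarrow> nat \<Rightarrow> (nat \<Rightarrow> nat)
     \<Rightarrow> 'a \<Rightarrow> (nat \<Rightarrow> complex)" where
  "Gamma_hat s w n p m om = iota_adj n \<circ> Uadj s w \<circ> Qop p m om \<circ> anal s \<circ> Pperp w n"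

definition wls_obj :: "(nat \<Rightarrow> 'a::complex_inner) \<Rightarrow> (nat \<Rightarrow> 'a) \<Rightarrow> nat \<Rightarrow> nat pmf \<Rightarrow> nat \<Rightarrow> (nat \<Rightarrow> nat)
     \<Rightarrow> 'a \<Rightarrow> (nat \<Rightarrow> complex) \<Rightarrow> real" where
  "wls_obj s w n p m om f x = (\<Sum>t<m. (1 / pmf p (om t)) *
      (cmod (cinner (synth w (iota n x)) (s (om t)) - cinner f (s (om t))))\<^sup>2)"

definition is_wls_solution :: "(nat \<Rightarrow> 'a::complex_inner) \<Rightarrow> (nat \<Rightarrow> 'a) \<Rightarrow> nat \<Rightarrow> nat pmf \<Rightarrow> nat
     \<Rightarrow> (nat \<Rightarrow> nat) \<Rightarrow> 'a \<Rightarrow> (nat \<Rightarrow> complex) \<Rightarrow> bool" where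
  "is_wls_solution s w n p m om f x \<longleftrightarrow> x \<in> Cn n \<and>
     (\<forall>y\<in>Cn n. wls_obj s w n p m om f x \<le> wls_obj s w n p m om f y)"

text \<open>the i.i.d. sample i_1,...,i_m with law p (indices t = 0..m-1)\<close>
definition sample :: "nat pmf \<Rightarrow> nat \<Rightarrow> (nat \<Rightarrow> nat) pmf" where
  "sample p m = Pi_pmf {..<m} 0 (\<lambda>_. p)"

end

theory Submission
  imports Defs
begin

lemma scaleC_zero_left[simp]: "(0::complex) *\<^sub>C x = (0::'a::complex_inner)"
proof -
  have "(0::complex) *\<^sub>C x = (0 + 0) *\<^sub>C x" by simp
  also have "\<dots> = 0 *\<^sub>C x + 0 *\<^sub>C x" by (rule scaleC_add_left)
  finally show ?thesis by simp
qed

lemma scaleC_zero_right[simp]: "a *\<^sub>C (0::'a::complex_inner) = 0"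
proof -
  have "a *\<^sub>C (0::'a) = a *\<^sub>C (0 + 0)" by simp
  also have "\<dots> = a *\<^sub>C 0 + a *\<^sub>C 0" by (rule scaleC_add_right)
  finally show ?thesis by simp
qed

lemma scaleC_minus_left: "(- a) *\<^sub>C x = - (a *\<^sub>C (x::'a::complex_inner))"
proof -
  have "a *\<^sub>C x + (- a) *\<^sub>C x = 0" by (simp add: scaleC_add_left[symmetric])
  then show ?thesis by (simp add: eq_neg_iff_add_eq_0 add.commute)
qed

lemma scaleC_minus_right: "a *\<^sub>C (- x) = - (a *\<^sub>C (x::'a::complex_inner))"
proof -
  have "a *\<^sub>C x + a *\<^sub>C (- x) = 0" by (simp add: scaleC_add_right[symmetric])
  then show ?thesis by (simp add: eq_neg_iff_add_eq_0 add.commute)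
qed

lemma scaleC_diff_left: "(a - b) *\<^sub>C x = a *\<^sub>C x - b *\<^sub>C (x::'a::complex_inner)"
  using scaleC_add_left[of a "-b" x] by (simp add: scaleC_minus_left)

lemma scaleC_diff_right: "a *\<^sub>C (x - y) = a *\<^sub>C x - a *\<^sub>C (y::'a::complex_inner)"
  using scaleC_add_right[of a x "-y"] by (simp add: scaleC_minus_right)

lemma scaleC_sum_left: "(\<Sum>i\<in>I. c i) *\<^sub>C (x::'a::complex_inner) = (\<Sum>i\<in>I. c i *\<^sub>C x)"
  by (induction I rule: infinite_finite_induct) (auto simp: scaleC_add_left)

lemma scaleC_sum_right: "a *\<^sub>C (\<Sum>i\<in>I. f i) = (\<Sum>i\<in>I. a *\<^sub>C (f i::'a::complex_inner))"
  by (induction I rule: infinite_finite_induct) (auto simp: scaleC_add_right)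

lemma cinner_zero_left[simp]: "cinner (0::'a::complex_inner) y = 0"
  using cinner_add_left[of "0::'a" 0 y] by simp

lemma cinner_add_right: "cinner x (y + z) = cinner x y + cinner (x::'a::complex_inner) z"
proof -
  have "cinner x (y + z) = cnj (cinner (y + z) x)" by (rule cinner_commute)
  also have "\<dots> = cnj (cinner y x) + cnj (cinner z x)" by (simp add: cinner_add_left)
  also have "\<dots> = cinner x y + cinner x z" by (simp add: cinner_commute[of x y] cinner_commute[of x z])
  finally show ?thesis .
qed

lemma cinner_zero_right[simp]: "cinner (x::'a::complex_inner) 0 = 0"
  by (subst cinner_commute) simp

lemma cinner_scaleC_right: "cinner x (a *\<^sub>C y) = cnj a * cinner (x::'a::complex_inner) y"
proof -
  have "cinner x (a *\<^sub>C y) = cnj (cinner (a *\<^sub>C y) x)" by (rule cinner_commute)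
  also have "\<dots> = cnj a * cnj (cinner y x)" by (simp add: cinner_scaleC_left)
  also have "\<dots> = cnj a * cinner x y" by (simp add: cinner_commute[of x y])
  finally show ?thesis .
qed

lemma cinner_minus_left: "cinner (- x) y = - cinner (x::'a::complex_inner) y"
  using cinner_add_left[of x "-x" y] by (simp add: eq_neg_iff_add_eq_0 add.commute)

lemma cinner_minus_right: "cinner x (- y) = - cinner (x::'a::complex_inner) y"
  using cinner_add_right[of x y "-y"] by (simp add: eq_neg_iff_add_eq_0 add.commute)

lemma cinner_diff_left: "cinner (x - y) z = cinner x z - cinner (y::'a::complex_inner) z"
  using cinner_add_left[of x "-y" z] by (simp add: cinner_minus_left)

lemma cinner_diff_right: "cinner x (y - z) = cinner x y - cinner (x::'a::complex_inner) z"
  using cinner_add_right[of x y "-z"] by (simp add: cinner_minus_right)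

lemma cinner_sum_left: "cinner (\<Sum>i\<in>I. f i) y = (\<Sum>i\<in>I. cinner (f i) (y::'a::complex_inner))"
  by (induction I rule: infinite_finite_induct) (auto simp: cinner_add_left)

lemma cinner_sum_right: "cinner x (\<Sum>i\<in>I. f i) = (\<Sum>i\<in>I. cinner (x::'a::complex_inner) (f i))"
  by (induction I rule: infinite_finite_induct) (auto simp: cinner_add_right)

lemma cinner_scaleR_left: "cinner (r *\<^sub>R x) y = complex_of_real r * cinner (x::'a::complex_inner) y"
  by (simp add: scaleR_scaleC cinner_scaleC_left)

lemma norm_sq_cinner: "complex_of_real ((norm (x::'a::complex_inner))\<^sup>2) = cinner x x"
  by (simp add: cinner_self_norm)

lemma cinner_self_Re: "Re (cinner x (x::'a::complex_inner)) = (norm x)\<^sup>2"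
  by (simp add: cinner_self_norm)

lemma norm_scaleC: "norm (a *\<^sub>C (x::'a::complex_inner)) = cmod a * norm x"
proof -
  have "complex_of_real ((norm (a *\<^sub>C x))\<^sup>2) = cinner (a *\<^sub>C x) (a *\<^sub>C x)"
    by (simp only: cinner_self_norm)
  also have "\<dots> = (a * cnj a) * cinner x x"
    by (simp add: cinner_scaleC_left cinner_scaleC_right mult.assoc)
  also have "\<dots> = complex_of_real ((cmod a)\<^sup>2) * complex_of_real ((norm x)\<^sup>2)"
    by (simp only: complex_norm_square[symmetric] cinner_self_norm)
  also have "\<dots> = complex_of_real ((cmod a * norm x)\<^sup>2)"
    by (simp only: of_real_mult[symmetric] power_mult_distrib)
  finally have "(norm (a *\<^sub>C x))\<^sup>2 = (cmod a * norm x)\<^sup>2" by (simp only: of_real_eq_iff)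
  then show ?thesis by (simp add: power2_eq_iff_nonneg)
qed

lemma pythagoras:
  assumes "cinner x y = 0"
  shows "(norm (x + (y::'a::complex_inner)))\<^sup>2 = (norm x)\<^sup>2 + (norm y)\<^sup>2"
proof -
  have yx: "cinner y x = 0" using assms cinner_commute[of y x] by simp
  have "complex_of_real ((norm (x + y))\<^sup>2) = cinner (x + y) (x + y)"
    by (simp only: cinner_self_norm)
  also have "\<dots> = cinner x x + cinner y y"
    by (simp add: cinner_add_left cinner_add_right assms yx)
  also have "\<dots> = complex_of_real ((norm x)\<^sup>2 + (norm y)\<^sup>2)"
    by (simp only: cinner_self_norm of_real_add)
  finally show ?thesis by (simp only: of_real_eq_iff)
qed

lemma pythagoras_diff:
  assumes "cinner x y = 0"
  shows "(norm (x - (y::'a::complex_inner)))\<^sup>2 = (norm x)\<^sup>2 + (norm y)\<^sup>2"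
  using pythagoras[of x "-y"] assms by (simp add: cinner_minus_right)

lemma cauchy_schwarz_c: "cmod (cinner x y) \<le> norm x * norm (y::'a::complex_inner)"
proof (cases "y = 0")
  case True then show ?thesis by simp
next
  case False
  then have ny: "norm y > 0" by simp
  define a where "a = cinner x y / complex_of_real ((norm y)\<^sup>2)"
  have "cinner (x - a *\<^sub>C y) y = cinner x y - a * complex_of_real ((norm y)\<^sup>2)"
    by (simp add: cinner_diff_left cinner_scaleC_left cinner_self_norm)
  also have "\<dots> = 0" using ny by (simp add: a_def)
  finally have orth: "cinner (x - a *\<^sub>C y) (a *\<^sub>C y) = 0" by (simp add: cinner_scaleC_right)
  have "x = (x - a *\<^sub>C y) + a *\<^sub>C y" by simp
  then have "(norm x)\<^sup>2 = (norm (x - a *\<^sub>C y))\<^sup>2 + (norm (a *\<^sub>C y))\<^sup>2"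
    using pythagoras[OF orth] by metis
  then have "(norm (a *\<^sub>C y))\<^sup>2 \<le> (norm x)\<^sup>2" by simp
  then have "norm (a *\<^sub>C y) \<le> norm x" by (simp add: power2_le_iff_abs_le)
  then have "cmod a * norm y \<le> norm x" by (simp add: norm_scaleC)
  moreover have "cmod a = cmod (cinner x y) / (norm y)\<^sup>2"
    by (simp add: a_def norm_divide norm_power)
  ultimately have "cmod (cinner x y) / (norm y)\<^sup>2 * norm y \<le> norm x" by simp
  then have "cmod (cinner x y) / norm y \<le> norm x" using ny by (simp add: power2_eq_square)
  then show ?thesis using ny by (simp add: divide_le_eq mult.commute)
qed

lemma bounded_linear_cinner_left: "bounded_linear (\<lambda>x::'a::complex_inner. cinner x y)"
proof (rule bounded_linear_intro[where K = "norm y"])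
  show "cinner (x + z) y = cinner x y + cinner z y" for x z by (rule cinner_add_left)
  show "cinner (r *\<^sub>R x) y = r *\<^sub>R cinner x y" for r x
    by (simp add: cinner_scaleR_left scaleR_conv_of_real)
  show "norm (cinner x y) \<le> norm x * norm y" for x by (rule cauchy_schwarz_c)
qed

lemma bounded_linear_scaleC_right: "bounded_linear (\<lambda>x::'a::complex_inner. a *\<^sub>C x)"
proof (rule bounded_linear_intro[where K = "cmod a"])
  show "a *\<^sub>C (x + z) = a *\<^sub>C x + a *\<^sub>C z" for x z by (rule scaleC_add_right)
  show "a *\<^sub>C (r *\<^sub>R x) = r *\<^sub>R (a *\<^sub>C x)" for r x
    by (simp add: scaleR_scaleC scaleC_scaleC mult.commute)
  show "norm (a *\<^sub>C x) \<le> norm x * cmod a" for x by (simp add: norm_scaleC mult.commute)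
qed

lemma bounded_linear_cinner_scaleC: "bounded_linear (\<lambda>x::'a::complex_inner. cinner x y *\<^sub>C (c::'b::complex_inner))"
proof (rule bounded_linear_intro[where K = "norm y * norm c"])
  show "cinner (x + z) y *\<^sub>C c = cinner x y *\<^sub>C c + cinner z y *\<^sub>C c" for x z
    by (simp add: cinner_add_left scaleC_add_left)
  show "cinner (r *\<^sub>R x) y *\<^sub>C c = r *\<^sub>R (cinner x y *\<^sub>C c)" for r x
    by (simp add: cinner_scaleR_left scaleR_scaleC[of r "cinner x y *\<^sub>C c"] scaleC_scaleC)
  show "norm (cinner x y *\<^sub>C c) \<le> norm x * (norm y * norm c)" for x
    using mult_right_mono[OF cauchy_schwarz_c[of x y] norm_ge_zero[of c]] by (simp add: norm_scaleC mult.assoc)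
qed

lemma suminf_cinner_left:
  assumes "summable (f::nat \<Rightarrow> 'a::complex_inner)"
  shows "cinner (suminf f) y = (\<Sum>k. cinner (f k) y)"
  using bounded_linear.suminf[OF bounded_linear_cinner_left assms] by simp

lemma suminf_scaleC:
  assumes "summable (f::nat \<Rightarrow> 'a::complex_inner)"
  shows "a *\<^sub>C suminf f = (\<Sum>k. a *\<^sub>C f k)"
  using bounded_linear.suminf[OF bounded_linear_scaleC_right assms] by simp

lemma summable_scaleC:
  assumes "summable (f::nat \<Rightarrow> 'a::complex_inner)"
  shows "summable (\<lambda>k. a *\<^sub>C f k)"
  using bounded_linear.summable[OF bounded_linear_scaleC_right assms] .

definition cip :: "nat \<Rightarrow> (nat \<Rightarrow> complex) \<Rightarrow> (nat \<Rightarrow> complex) \<Rightarrow> complex" where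
  "cip n x y = (\<Sum>k<n. x k * cnj (y k))"

lemma cmod_sq_c: "(complex_of_real (cmod z))\<^sup>2 = z * cnj z"
  by (metis complex_norm_square of_real_power)

lemma e_mult_left: "e k j * z = (if j = k then z else 0)"
  by (simp add: e_def)

lemma e_mult_right: "z * cnj (e k j) = (if j = k then z else 0)"
  by (simp add: e_def)

lemma e_cmod_sq: "(cmod (e k j))\<^sup>2 = (if j = k then 1 else 0)"
  by (simp add: e_def)

lemma cnorm_sq: "(cnorm n x)\<^sup>2 = (\<Sum>k<n. (cmod (x k))\<^sup>2)"
  by (simp add: cnorm_def sum_nonneg)

lemma cnorm_nonneg: "cnorm n x \<ge> 0"
  by (simp add: cnorm_def sum_nonneg)

lemma cip_self: "cip n x x = complex_of_real ((cnorm n x)\<^sup>2)"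
  by (simp add: cip_def cnorm_sq cmod_sq_c)

lemma cip_commute: "cip n x y = cnj (cip n y x)"
  by (simp add: cip_def mult.commute)

lemma cip_e_right: "k < n \<Longrightarrow> cip n x (e k) = x k"
  by (simp add: cip_def e_mult_right)

lemma cip_e_left: "k < n \<Longrightarrow> cip n (e k) x = cnj (x k)"
  by (simp add: cip_def e_mult_left)

lemma cnorm_e: "k < n \<Longrightarrow> cnorm n (e k) = 1"
  by (simp add: cnorm_def e_cmod_sq)

lemma cnorm_eq_0_iff: "cnorm n u = 0 \<longleftrightarrow> (\<forall>k<n. u k = 0)"
proof -
  have "cnorm n u = 0 \<longleftrightarrow> (\<Sum>k<n. (cmod (u k))\<^sup>2) = 0" by (simp add: cnorm_def sum_nonneg)
  also have "\<dots> \<longleftrightarrow> (\<forall>k<n. u k = 0)" by (subst sum_nonneg_eq_0_iff) auto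
  finally show ?thesis .
qed

lemma cip_lincomb_left:
  "cip n (\<lambda>k. x k - (\<Sum>i\<in>I. c i * f i k)) z = cip n x z - (\<Sum>i\<in>I. c i * cip n (f i) z)"
  by (simp add: cip_def algebra_simps sum_subtractf sum_distrib_left sum_distrib_right sum.swap[of _ I])

lemma cip_lincomb_right:
  "cip n z (\<lambda>k. x k - (\<Sum>i\<in>I. c i * f i k)) = cip n z x - (\<Sum>i\<in>I. cnj (c i) * cip n z (f i))"
  by (simp add: cip_def algebra_simps sum_subtractf sum_distrib_left sum_distrib_right sum.swap[of _ I])

lemma cip_scale_left: "cip n (\<lambda>k. a * x k) y = a * cip n x y"
  by (simp add: cip_def sum_distrib_left mult.assoc)

lemma cip_div_left: "cip n (\<lambda>k. x k / a) y = cip n x y / a"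
  by (simp add: cip_def sum_divide_distrib)

lemma cip_div_right: "cip n y (\<lambda>k. x k / complex_of_real a) = cip n y x / complex_of_real a"
  by (simp add: cip_def sum_divide_distrib)

lemma cauchy_schwarz_cip: "cmod (cip n x y) \<le> cnorm n x * cnorm n y"
proof -
  have "cmod (cip n x y) \<le> (\<Sum>k<n. cmod (x k) * cmod (y k))"
    unfolding cip_def by (rule order_trans[OF norm_sum]) (simp add: norm_mult)
  also have "\<dots> \<le> L2_set (\<lambda>k. cmod (x k)) {..<n} * L2_set (\<lambda>k. cmod (y k)) {..<n}"
    using L2_set_mult_ineq[of "\<lambda>k. cmod (x k)" "\<lambda>k. cmod (y k)" "{..<n}"] by simp
  also have "\<dots> = cnorm n x * cnorm n y" by (simp add: L2_set_def cnorm_def)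
  finally show ?thesis .
qed

definition proj :: "nat \<Rightarrow> (nat \<Rightarrow> complex) list \<Rightarrow> (nat \<Rightarrow> complex) \<Rightarrow> (nat \<Rightarrow> complex)" where
  "proj n Q x = (\<lambda>k. x k - (\<Sum>i<length Q. cip n x (Q!i) * (Q!i) k))"

definition orthonormal :: "nat \<Rightarrow> (nat \<Rightarrow> complex) list \<Rightarrow> bool" where
  "orthonormal n Q \<longleftrightarrow> (\<forall>i<length Q. \<forall>j<length Q. cip n (Q!i) (Q!j) = (if i = j then 1 else 0))"

lemma proj_orth:
  assumes "orthonormal n Q" "j < length Q"
  shows "cip n (proj n Q x) (Q!j) = 0"
proof -
  have "cip n (proj n Q x) (Q!j) = cip n x (Q!j) - (\<Sum>i<length Q. cip n x (Q!i) * cip n (Q!i) (Q!j))"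
    unfolding proj_def by (rule cip_lincomb_left)
  also have "(\<Sum>i<length Q. cip n x (Q!i) * cip n (Q!i) (Q!j)) = (\<Sum>i<length Q. if i = j then cip n x (Q!j) else 0)"
    using assms by (intro sum.cong) (auto simp: orthonormal_def)
  also have "\<dots> = cip n x (Q!j)" using assms(2) by simp
  finally show ?thesis by simp
qed

lemma proj_herm: "cip n (proj n Q x) y = cip n x (proj n Q y)"
  unfolding proj_def cip_lincomb_left cip_lincomb_right
  by (simp add: cip_commute[of n y "Q!_"] mult.commute)

lemma proj_norm:
  assumes "orthonormal n Q"
  shows "(cnorm n (proj n Q x))\<^sup>2 = (cnorm n x)\<^sup>2 - (\<Sum>i<length Q. (cmod (cip n x (Q!i)))\<^sup>2)"
proof -
  have "cip n (proj n Q x) (proj n Q x) = cip n (proj n Q x) x - (\<Sum>i<length Q. cnj (cip n x (Q!i)) * cip n (proj n Q x) (Q!i))"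
    by (subst (2) proj_def, rule cip_lincomb_right)
  also have "(\<Sum>i<length Q. cnj (cip n x (Q!i)) * cip n (proj n Q x) (Q!i)) = 0"
    using proj_orth[OF assms] by simp
  also have "cip n (proj n Q x) x = cip n x x - (\<Sum>i<length Q. cip n x (Q!i) * cip n (Q!i) x)"
    unfolding proj_def by (rule cip_lincomb_left)
  also have "(\<Sum>i<length Q. cip n x (Q!i) * cip n (Q!i) x) = (\<Sum>i<length Q. complex_of_real ((cmod (cip n x (Q!i)))\<^sup>2))"
    by (intro sum.cong refl) (simp add: cip_commute[of n "Q!_" x] cmod_sq_c)
  finally have "complex_of_real ((cnorm n (proj n Q x))\<^sup>2) = complex_of_real ((cnorm n x)\<^sup>2 - (\<Sum>i<length Q. (cmod (cip n x (Q!i)))\<^sup>2))"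
    by (simp add: cip_self)
  then show ?thesis using of_real_eq_iff by blast
qed

lemma bessel:
  assumes "orthonormal n Q"
  shows "(\<Sum>i<length Q. (cmod (cip n x (Q!i)))\<^sup>2) \<le> (cnorm n x)\<^sup>2"
  using proj_norm[OF assms, of x] by (metis diff_ge_0_iff_ge zero_le_power2)

lemma orthonormal_norm1:
  assumes "orthonormal n Q" "i < length Q"
  shows "(cnorm n (Q!i))\<^sup>2 = 1"
proof -
  have "cip n (Q!i) (Q!i) = 1" using assms by (simp add: orthonormal_def)
  then have "complex_of_real ((cnorm n (Q!i))\<^sup>2) = complex_of_real 1" by (simp add: cip_self)
  then show ?thesis using of_real_eq_iff by blast
qed

lemma sum_norm_Q:
  assumes "orthonormal n Q"
  shows "(\<Sum>i<length Q. (cnorm n (Q!i))\<^sup>2) = real (length Q)"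
  using orthonormal_norm1[OF assms] by simp

lemma sum_norm_Q_swap:
  "(\<Sum>i<length Q. (cnorm n (Q!i))\<^sup>2) = (\<Sum>k<n. \<Sum>i<length Q. (cmod (cip n (e k) (Q!i)))\<^sup>2)"
  by (simp add: cnorm_sq cip_e_left sum.swap[of _ "{..<n}"])

lemma orthonormal_length:
  assumes "orthonormal n Q"
  shows "length Q \<le> n"
proof -
  have "real (length Q) = (\<Sum>k<n. \<Sum>i<length Q. (cmod (cip n (e k) (Q!i)))\<^sup>2)"
    using sum_norm_Q[OF assms] sum_norm_Q_swap by simp
  also have "\<dots> \<le> (\<Sum>k<n. (cnorm n (e k))\<^sup>2)"
    by (intro sum_mono bessel[OF assms])
  also have "\<dots> = real n" by (simp add: cnorm_e)
  finally show ?thesis by simp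
qed

lemma trace_proj:
  assumes "orthonormal n Q"
  shows "(\<Sum>k<n. (cnorm n (proj n Q (e k)))\<^sup>2) = real n - real (length Q)"
proof -
  have "(\<Sum>k<n. (cnorm n (proj n Q (e k)))\<^sup>2) = (\<Sum>k<n. 1 - (\<Sum>i<length Q. (cmod (cip n (e k) (Q!i)))\<^sup>2))"
    by (intro sum.cong refl) (simp add: proj_norm[OF assms] cnorm_e)
  also have "\<dots> = real n - (\<Sum>k<n. \<Sum>i<length Q. (cmod (cip n (e k) (Q!i)))\<^sup>2)"
    by (simp add: sum_subtractf)
  also have "\<dots> = real n - real (length Q)"
    using sum_norm_Q[OF assms] sum_norm_Q_swap by simp
  finally show ?thesis .
qed

definition gs_step :: "nat \<Rightarrow> (nat \<Rightarrow> complex) list \<Rightarrow> (nat \<Rightarrow> complex) \<Rightarrow> (nat \<Rightarrow> complex) list" where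
  "gs_step n Q v = (if cnorm n (proj n Q v) = 0 then Q
      else Q @ [(\<lambda>k. proj n Q v k / complex_of_real (cnorm n (proj n Q v)))])"

lemma orthonormal_snoc:
  assumes "orthonormal n Q" "\<forall>i<length Q. cip n (Q!i) q = 0" "cip n q q = 1"
  shows "orthonormal n (Q @ [q])"
  unfolding orthonormal_def
proof (intro allI impI)
  fix i j assume i: "i < length (Q @ [q])" and j: "j < length (Q @ [q])"
  have qi: "cip n q (Q!i) = 0" if "i < length Q" for i
    using assms(2) that cip_commute[of n q "Q!i"] by simp
  show "cip n ((Q @ [q]) ! i) ((Q @ [q]) ! j) = (if i = j then 1 else 0)"
    using i j assms(1,3) qi assms(2)
    by (cases "i < length Q"; cases "j < length Q") (auto simp: nth_append orthonormal_def less_Suc_eq)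
qed

lemma gs_step_orthonormal:
  assumes "orthonormal n Q"
  shows "orthonormal n (gs_step n Q v)"
proof (cases "cnorm n (proj n Q v) = 0")
  case True then show ?thesis using assms by (simp add: gs_step_def)
next
  case False
  let ?u = "proj n Q v" let ?c = "cnorm n (proj n Q v)"
  have pos: "?c > 0" using False cnorm_nonneg[of n ?u] by simp
  have "cip n (Q!i) (\<lambda>k. ?u k / complex_of_real ?c) = 0" if "i < length Q" for i
    using proj_orth[OF assms that, of v] cip_commute[of n "Q!i" ?u]
    by (simp add: cip_div_right)
  moreover have "cip n (\<lambda>k. ?u k / complex_of_real ?c) (\<lambda>k. ?u k / complex_of_real ?c) = 1"
    using pos by (simp add: cip_div_right cip_div_left cip_self power2_eq_square)
  ultimately show ?thesis using False assms by (simp add: gs_step_def orthonormal_snoc)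
qed

lemma gs_full:
  assumes "orthonormal n Q" "length Q = n" "k < n"
  shows "proj n Q y k = 0"
proof (rule ccontr)
  assume "proj n Q y k \<noteq> 0"
  then have "cnorm n (proj n Q y) \<noteq> 0" using assms(3) cnorm_eq_0_iff by blast
  then have "length (gs_step n Q y) = Suc n" using assms(2) by (simp add: gs_step_def)
  moreover have "length (gs_step n Q y) \<le> n" by (rule orthonormal_length[OF gs_step_orthonormal[OF assms(1)]])
  ultimately show False by simp
qed

definition clin :: "nat \<Rightarrow> ((nat \<Rightarrow> complex) \<Rightarrow> (nat \<Rightarrow> complex)) \<Rightarrow> bool" where
  "clin n T \<longleftrightarrow> (\<forall>x\<in>Cn n. T x \<in> Cn n) \<and> (\<forall>x\<in>Cn n. T x = (\<lambda>i. \<Sum>l<n. x l * T (e l) i))"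

lemma e_in_Cn: "l < n \<Longrightarrow> e l \<in> Cn n"
  by (simp add: Cn_def e_def)

lemma zero_in_Cn: "(\<lambda>_. 0) \<in> Cn n"
  by (simp add: Cn_def)

lemma Cn_lincomb: "(\<forall>i\<in>I. a i \<in> Cn n) \<Longrightarrow> (\<lambda>j. \<Sum>i\<in>I. \<beta> i * a i j) \<in> Cn n"
  by (simp add: Cn_def)

lemma Cn_diff: "x \<in> Cn n \<Longrightarrow> y \<in> Cn n \<Longrightarrow> (\<lambda>j. x j - y j) \<in> Cn n"
  by (simp add: Cn_def)

lemma Cn_add: "x \<in> Cn n \<Longrightarrow> y \<in> Cn n \<Longrightarrow> (\<lambda>j. x j + y j) \<in> Cn n"
  by (simp add: Cn_def)

lemma Cn_scale: "x \<in> Cn n \<Longrightarrow> (\<lambda>j. c * x j) \<in> Cn n"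
  by (simp add: Cn_def)

lemma Cn_div: "x \<in> Cn n \<Longrightarrow> (\<lambda>j. x j / c) \<in> Cn n"
  by (simp add: Cn_def)

lemma Cn_eqI:
  assumes "x \<in> Cn n" "y \<in> Cn n" "\<forall>k<n. x k = y k"
  shows "x = y"
proof (rule ext)
  fix k show "x k = y k"
  proof (cases "k < n")
    case True then show ?thesis using assms(3) by simp
  next
    case False then show ?thesis using assms(1,2) by (simp add: Cn_def)
  qed
qed

lemma Cn_expand: "x \<in> Cn n \<Longrightarrow> x = (\<lambda>j. \<Sum>l<n. x l * e l j)"
  by (rule ext) (auto simp: Cn_def e_def mult.commute[of _ "if _ then _ else _"] if_distrib cong: if_cong)

lemma clin_zero: "clin n T \<Longrightarrow> T (\<lambda>_. 0) = (\<lambda>_. 0)"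
  unfolding clin_def using zero_in_Cn by auto

lemma clin_lincomb:
  assumes "clin n T" "finite I" "\<forall>i\<in>I. a i \<in> Cn n"
  shows "T (\<lambda>j. \<Sum>i\<in>I. \<beta> i * a i j) = (\<lambda>k. \<Sum>i\<in>I. \<beta> i * T (a i) k)"
proof -
  have mem: "(\<lambda>j. \<Sum>i\<in>I. \<beta> i * a i j) \<in> Cn n" using assms(3) by (rule Cn_lincomb)
  have "T (\<lambda>j. \<Sum>i\<in>I. \<beta> i * a i j) = (\<lambda>k. \<Sum>l<n. (\<Sum>i\<in>I. \<beta> i * a i l) * T (e l) k)"
    using assms(1) mem by (simp add: clin_def)
  also have "\<dots> = (\<lambda>k. \<Sum>i\<in>I. \<beta> i * (\<Sum>l<n. a i l * T (e l) k))"
    by (simp add: sum_distrib_left sum_distrib_right sum.swap[of _ I] mult.assoc)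
  also have "\<dots> = (\<lambda>k. \<Sum>i\<in>I. \<beta> i * T (a i) k)"
  proof -
    have "\<forall>i\<in>I. T (a i) = (\<lambda>k. \<Sum>l<n. a i l * T (e l) k)" using assms(1,3) by (simp add: clin_def)
    then show ?thesis by (intro ext sum.cong) auto
  qed
  finally show ?thesis .
qed

lemma clin_diff:
  assumes "clin n T" "x \<in> Cn n" "y \<in> Cn n"
  shows "T (\<lambda>j. x j - y j) = (\<lambda>k. T x k - T y k)"
proof -
  have "T (\<lambda>j. x j - y j) = (\<lambda>k. \<Sum>l<n. (x l - y l) * T (e l) k)"
    using assms Cn_diff by (simp add: clin_def)
  also have "\<dots> = (\<lambda>k. T x k - T y k)"
    using assms by (simp add: clin_def algebra_simps sum_subtractf)
  finally show ?thesis .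
qed

lemma clin_add:
  assumes "clin n T" "x \<in> Cn n" "y \<in> Cn n"
  shows "T (\<lambda>j. x j + y j) = (\<lambda>k. T x k + T y k)"
proof -
  have "T (\<lambda>j. x j + y j) = (\<lambda>k. \<Sum>l<n. (x l + y l) * T (e l) k)"
    using assms Cn_add by (simp add: clin_def)
  also have "\<dots> = (\<lambda>k. T x k + T y k)"
    using assms by (simp add: clin_def algebra_simps sum.distrib)
  finally show ?thesis .
qed

lemma clin_scale:
  assumes "clin n T" "x \<in> Cn n"
  shows "T (\<lambda>j. c * x j) = (\<lambda>k. c * T x k)"
proof -
  have "T (\<lambda>j. c * x j) = (\<lambda>k. \<Sum>l<n. (c * x l) * T (e l) k)"
    using assms Cn_scale by (simp add: clin_def)
  also have "\<dots> = (\<lambda>k. c * T x k)"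
    using assms by (simp add: clin_def sum_distrib_left mult.assoc)
  finally show ?thesis .
qed

lemma clin_div:
  assumes "clin n T" "x \<in> Cn n"
  shows "T (\<lambda>j. x j / c) = (\<lambda>k. T x k / c)"
  using clin_scale[OF assms, of "inverse c"] by (simp add: divide_inverse mult.commute)

definition colQ :: "nat \<Rightarrow> ((nat \<Rightarrow> complex) \<Rightarrow> (nat \<Rightarrow> complex)) \<Rightarrow> nat \<Rightarrow> (nat \<Rightarrow> complex) list" where
  "colQ n T l = foldl (\<lambda>Q j. gs_step n Q (T (e j))) [] [0..<l]"

lemma colQ_0: "colQ n T 0 = []" by (simp add: colQ_def)
lemma colQ_Suc: "colQ n T (Suc l) = gs_step n (colQ n T l) (T (e l))" by (simp add: colQ_def)

lemma colQ_inv: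
  assumes T: "clin n T" and inj: "inj_on T (Cn n)" and l: "l \<le> n"
  shows "orthonormal n (colQ n T l) \<and> length (colQ n T l) = l \<and>
    (\<forall>i<l. \<exists>a\<in>Cn n. (\<forall>k\<ge>l. a k = 0) \<and> (\<forall>k<n. (colQ n T l ! i) k = T a k))"
  using l
proof (induction l)
  case 0 then show ?case by (simp add: colQ_0 orthonormal_def)
next
  case (Suc l)
  let ?Q = "colQ n T l"
  have IH: "orthonormal n ?Q" "length ?Q = l"
      "\<forall>i<l. \<exists>a\<in>Cn n. (\<forall>k\<ge>l. a k = 0) \<and> (\<forall>k<n. (?Q ! i) k = T a k)"
    using Suc by auto
  have "\<forall>i. \<exists>a. i < l \<longrightarrow> a \<in> Cn n \<and> (\<forall>k\<ge>l. a k = 0) \<and> (\<forall>k<n. (?Q ! i) k = T a k)"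
    using IH(3) by blast
  then obtain a where a0: "\<forall>i. i < l \<longrightarrow> a i \<in> Cn n \<and> (\<forall>k\<ge>l. a i k = 0) \<and> (\<forall>k<n. (?Q ! i) k = T (a i) k)"
    by (rule choice[THEN exE])
  then have a: "\<And>i. i < l \<Longrightarrow> a i \<in> Cn n \<and> (\<forall>k\<ge>l. a i k = 0) \<and> (\<forall>k<n. (?Q ! i) k = T (a i) k)"
    by blast
  have ln: "l < n" using Suc by simp
  define \<beta> where "\<beta> i = cip n (T (e l)) (?Q ! i)" for i
  define z where "z = (\<lambda>j. e l j - (\<Sum>i<l. \<beta> i * a i j))"
  have zmem: "z \<in> Cn n" unfolding z_def using e_in_Cn[OF ln] a by (intro Cn_diff Cn_lincomb) auto
  have amem: "\<forall>i\<in>{..<l}. a i \<in> Cn n" using a by auto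
  have L: "T (\<lambda>j. \<Sum>i<l. \<beta> i * a i j) = (\<lambda>k. \<Sum>i<l. \<beta> i * T (a i) k)"
    by (rule clin_lincomb[OF T finite_lessThan amem])
  have "T z = (\<lambda>k. T (e l) k - T (\<lambda>j. \<Sum>i<l. \<beta> i * a i j) k)"
    unfolding z_def by (rule clin_diff[OF T e_in_Cn[OF ln] Cn_lincomb[OF amem]])
  then have Tz: "T z = (\<lambda>k. T (e l) k - (\<Sum>i<l. \<beta> i * T (a i) k))"
    using L by simp
  have uz: "proj n ?Q (T (e l)) k = T z k" if "k < n" for k
    using that a by (simp add: proj_def Tz IH(2) \<beta>_def)
  have zl: "z l = 1" using a by (simp add: z_def e_def)
  have zhigh: "z k = 0" if "k > l" for k using a that by (simp add: z_def e_def)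
  have nz: "cnorm n (proj n ?Q (T (e l))) \<noteq> 0"
  proof
    assume c0: "cnorm n (proj n ?Q (T (e l))) = 0"
    have "\<forall>k<n. proj n ?Q (T (e l)) k = 0" using c0 cnorm_eq_0_iff by blast
    then have "\<forall>k<n. T z k = 0" using uz by simp
    then have "T z = (\<lambda>_. 0)" using T zmem by (intro Cn_eqI) (auto simp: clin_def zero_in_Cn)
    then have "T z = T (\<lambda>_. 0)" using clin_zero[OF T] by simp
    then have "z = (\<lambda>_. 0)" by (rule inj_onD[OF inj _ zmem zero_in_Cn])
    then show False using zl by simp
  qed
  let ?c = "cnorm n (proj n ?Q (T (e l)))"
  let ?q = "\<lambda>k. proj n ?Q (T (e l)) k / complex_of_real ?c"
  have QS: "colQ n T (Suc l) = ?Q @ [?q]" using nz by (simp add: colQ_Suc gs_step_def)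
  have "orthonormal n (colQ n T (Suc l))" by (simp add: colQ_Suc gs_step_orthonormal IH(1))
  moreover have "length (colQ n T (Suc l)) = Suc l" using QS IH(2) by simp
  moreover have "\<forall>i<Suc l. \<exists>a\<in>Cn n. (\<forall>k\<ge>Suc l. a k = 0) \<and> (\<forall>k<n. (colQ n T (Suc l) ! i) k = T a k)"
  proof (intro allI impI)
    fix i assume i: "i < Suc l"
    show "\<exists>a\<in>Cn n. (\<forall>k\<ge>Suc l. a k = 0) \<and> (\<forall>k<n. (colQ n T (Suc l) ! i) k = T a k)"
    proof (cases "i < l")
      case True
      then show ?thesis using a[OF True] QS IH(2) by (intro bexI[of _ "a i"]) (auto simp: nth_append)
    next
      case False
      then have il: "i = l" using i by simp
      have "T (\<lambda>j. z j / complex_of_real ?c) = (\<lambda>k. T z k / complex_of_real ?c)"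
        by (rule clin_div[OF T zmem])
      note TD = this
      have nth: "colQ n T (Suc l) ! i = ?q" using il QS IH(2) by (simp add: nth_append)
      show ?thesis
      proof (rule bexI[of _ "\<lambda>j. z j / complex_of_real ?c"])
        show "(\<lambda>j. z j / complex_of_real ?c) \<in> Cn n" by (rule Cn_div[OF zmem])
        have "\<forall>k\<ge>Suc l. z k / complex_of_real ?c = 0" using zhigh by (simp add: Suc_le_eq)
        moreover have "\<forall>k<n. (colQ n T (Suc l) ! i) k = T (\<lambda>j. z j / complex_of_real ?c) k"
          using uz by (simp add: nth TD)
        ultimately show "(\<forall>k\<ge>Suc l. z k / complex_of_real ?c = 0) \<and>
          (\<forall>k<n. (colQ n T (Suc l) ! i) k = T (\<lambda>j. z j / complex_of_real ?c) k)" by blast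
      qed
    qed
  qed
  ultimately show ?case by blast
qed

lemma clin_surj:
  assumes T: "clin n T" and inj: "inj_on T (Cn n)" and y: "y \<in> Cn n"
  shows "\<exists>x\<in>Cn n. T x = y"
proof -
  let ?Q = "colQ n T n"
  have I: "orthonormal n ?Q" "length ?Q = n"
      "\<forall>i<n. \<exists>a\<in>Cn n. (\<forall>k\<ge>n. a k = 0) \<and> (\<forall>k<n. (?Q ! i) k = T a k)"
    using colQ_inv[OF T inj, of n] by auto
  have "\<forall>i. \<exists>a. i < n \<longrightarrow> a \<in> Cn n \<and> (\<forall>k<n. (?Q ! i) k = T a k)"
    using I(3) by blast
  then obtain a where a0: "\<forall>i. i < n \<longrightarrow> a i \<in> Cn n \<and> (\<forall>k<n. (?Q ! i) k = T (a i) k)"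
    by (rule choice[THEN exE])
  then have a: "\<And>i. i < n \<Longrightarrow> a i \<in> Cn n \<and> (\<forall>k<n. (?Q ! i) k = T (a i) k)"
    by blast
  define x where "x = (\<lambda>j. \<Sum>i<n. cip n y (?Q ! i) * a i j)"
  have xmem: "x \<in> Cn n" unfolding x_def using a by (intro Cn_lincomb) auto
  have amem: "\<forall>i\<in>{..<n}. a i \<in> Cn n" using a by auto
  have Tx: "T x = (\<lambda>k. \<Sum>i<n. cip n y (?Q ! i) * T (a i) k)"
    unfolding x_def by (rule clin_lincomb[OF T finite_lessThan amem])
  have "y k = T x k" if "k < n" for k
  proof -
    have "proj n ?Q y k = 0" by (rule gs_full[OF I(1) I(2) that])
    then have "y k = (\<Sum>i<n. cip n y (?Q ! i) * (?Q ! i) k)" using I(2) by (simp add: proj_def)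
    also have "\<dots> = T x k" using a that by (simp add: Tx)
    finally show ?thesis .
  qed
  then have "T x = y" using T xmem y by (intro Cn_eqI) (auto simp: clin_def)
  then show ?thesis using xmem by blast
qed

lemma clin_bij:
  assumes T: "clin n T" and inj: "inj_on T (Cn n)"
  shows "bij_betw T (Cn n) (Cn n)"
  unfolding bij_betw_def
proof
  show "inj_on T (Cn n)" by fact
  show "T ` Cn n = Cn n"
    using T clin_surj[OF T inj] by (auto simp: clin_def)
qed

lemma clin_inv:
  assumes T: "clin n T" and inj: "inj_on T (Cn n)"
  shows "clin n (inv_into (Cn n) T)"
proof -
  have bij: "bij_betw T (Cn n) (Cn n)" by (rule clin_bij[OF T inj])
  let ?S = "inv_into (Cn n) T"
  have Smem: "?S x \<in> Cn n" if "x \<in> Cn n" for x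
    using bij that by (metis bij_betw_def inv_into_into)
  have TS: "T (?S x) = x" if "x \<in> Cn n" for x
    by (rule bij_betw_inv_into_right[OF bij that])
  have "?S z = (\<lambda>i. \<Sum>l<n. z l * ?S (e l) i)" if z: "z \<in> Cn n" for z
  proof -
    define x where "x = (\<lambda>i. \<Sum>l<n. z l * ?S (e l) i)"
    have xmem: "x \<in> Cn n" unfolding x_def using Smem e_in_Cn by (intro Cn_lincomb) auto
    have smem: "\<forall>l\<in>{..<n}. ?S (e l) \<in> Cn n" using Smem e_in_Cn by auto
    have "T x = (\<lambda>k. \<Sum>l<n. z l * T (?S (e l)) k)"
      unfolding x_def by (rule clin_lincomb[OF T finite_lessThan smem])
    also have "\<dots> = (\<lambda>k. \<Sum>l<n. z l * e l k)" using TS e_in_Cn by simp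
    also have "\<dots> = z" using Cn_expand[OF z] by simp
    finally have "T x = z" .
    then have "?S z = ?S (T x)" by simp
    also have "\<dots> = x" using inj xmem by (simp add: inv_into_f_f)
    finally show ?thesis by (simp add: x_def)
  qed
  then show ?thesis using Smem by (simp add: clin_def)
qed

lemma cspan_sum:
  assumes "finite K" "f ` K \<subseteq> X"
  shows "(\<Sum>k\<in>K. c k *\<^sub>C (f k::'a::complex_inner)) \<in> cspan X"
proof -
  define d where "d v = (\<Sum>k\<in>{k\<in>K. f k = v}. c k)" for v
  have "(\<Sum>v\<in>f ` K. d v *\<^sub>C v) = (\<Sum>v\<in>f ` K. \<Sum>k\<in>{k\<in>K. f k = v}. c k *\<^sub>C f k)"
    by (auto simp: d_def scaleC_sum_left intro!: sum.cong)
  also have "\<dots> = (\<Sum>k\<in>K. c k *\<^sub>C f k)"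
    using sum.group[OF assms(1) finite_imageI[OF assms(1)], where g = f and h = "\<lambda>k. c k *\<^sub>C f k"]
    by simp
  finally show ?thesis unfolding cspan_def using assms by (intro CollectI exI[of _ "f ` K"] exI[of _ d]) auto
qed

lemma cspan_sub_clspan: "cspan X \<subseteq> clspan X"
  by (simp add: clspan_def closure_subset)

definition Wn :: "(nat \<Rightarrow> 'a::complex_inner) \<Rightarrow> nat \<Rightarrow> (nat \<Rightarrow> complex) \<Rightarrow> 'a" where
  "Wn w n x = (\<Sum>l<n. x l *\<^sub>C w l)"

lemma synth_iota: "synth w (iota n x) = Wn w n x"
proof -
  have "synth w (iota n x) = (\<Sum>k<n. iota n x k *\<^sub>C w k)"
    unfolding synth_def by (rule suminf_finite) (auto simp: iota_def)
  then show ?thesis by (simp add: Wn_def iota_def)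
qed

lemma Wn_e: "l < n \<Longrightarrow> Wn w n (e l) = w l"
  by (simp add: Wn_def e_def if_distrib[of "\<lambda>c. c *\<^sub>C _"] scaleC_one cong: if_cong)

lemma cinner_Wn_left: "cinner (Wn w n x) h = (\<Sum>l<n. x l * cinner (w l) h)"
  by (simp add: Wn_def cinner_sum_left cinner_scaleC_left)

lemma cinner_Wn_right: "cinner h (Wn w n x) = (\<Sum>l<n. cnj (x l) * cinner h (w l))"
  by (simp add: Wn_def cinner_sum_right cinner_scaleC_right)

lemma Wn_in_cspan: "Wn w n x \<in> cspan (range w)"
  unfolding Wn_def by (rule cspan_sum) auto

lemma Wn_diff: "Wn w n (\<lambda>j. x j - y j) = Wn w n x - Wn w n y"
  by (simp add: Wn_def scaleC_diff_left sum_subtractf)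

lemma Wn_add: "Wn w n (\<lambda>j. x j + y j) = Wn w n x + Wn w n y"
  by (simp add: Wn_def scaleC_add_left sum.distrib)

lemma iota_l2: "iota n x \<in> l2"
proof -
  have "summable (\<lambda>k. (cmod (iota n x k))\<^sup>2)"
    by (rule summable_finite[of "{..<n}"]) (auto simp: iota_def)
  then show ?thesis by (simp add: l2_def)
qed

lemma l2norm_iota: "l2norm (iota n x) = cnorm n x"
proof -
  have "(\<Sum>k. (cmod (iota n x k))\<^sup>2) = (\<Sum>k<n. (cmod (iota n x k))\<^sup>2)"
    by (rule suminf_finite) (auto simp: iota_def)
  then show ?thesis by (simp add: l2norm_def cnorm_def iota_def)
qed

locale setting =
  fixes s w :: "nat \<Rightarrow> 'h::{complex_inner, complete_space}" and A B C D :: real and n :: nat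
  assumes frame: "is_frame_for_span s A B"
    and riesz: "is_riesz_basis_for_span w C D"
    and W_sub_S: "clspan (range w) \<subseteq> clspan (range s)"
begin

lemma A_pos: "A > 0" and AB: "A \<le> B" and C_pos: "C > 0" and CD: "C \<le> D"
  using frame riesz by (auto simp: is_frame_for_span_def is_riesz_basis_for_span_def)

lemma B_pos: "B > 0" using A_pos AB by simp
lemma D_pos: "D > 0" using C_pos CD by simp

lemma frame_bounds:
  assumes "h \<in> clspan (range s)"
  shows "summable (\<lambda>k. (cmod (cinner h (s k)))\<^sup>2)"
    "A * (norm h)\<^sup>2 \<le> (\<Sum>k. (cmod (cinner h (s k)))\<^sup>2)"
    "(\<Sum>k. (cmod (cinner h (s k)))\<^sup>2) \<le> B * (norm h)\<^sup>2"
  using frame assms by (auto simp: is_frame_for_span_def)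

lemma riesz_Wn:
  "C * (cnorm n x)\<^sup>2 \<le> (norm (Wn w n x))\<^sup>2" "(norm (Wn w n x))\<^sup>2 \<le> D * (cnorm n x)\<^sup>2"
  using riesz iota_l2[of n x] by (auto simp: is_riesz_basis_for_span_def l2norm_iota synth_iota)

lemma Wn_in_S: "Wn w n x \<in> clspan (range s)"
  using Wn_in_cspan[of w n x] cspan_sub_clspan W_sub_S by blast

lemma w_in_S: "w l \<in> clspan (range s)"
proof -
  have "w l = (\<Sum>k\<in>{l}. 1 *\<^sub>C w k)" by (simp add: scaleC_one)
  also have "\<dots> \<in> cspan (range w)" by (rule cspan_sum) auto
  finally show ?thesis using cspan_sub_clspan W_sub_S by blast
qed

lemma finite_synth_bound:
  assumes "finite K"
  shows "(norm (\<Sum>k\<in>K. z k *\<^sub>C s k))\<^sup>2 \<le> B * (\<Sum>k\<in>K. (cmod (z k))\<^sup>2)"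
proof -
  let ?g = "\<Sum>k\<in>K. z k *\<^sub>C s k"
  have gS: "?g \<in> clspan (range s)" using cspan_sum[OF assms, of s "range s" z] cspan_sub_clspan by blast
  have "complex_of_real ((norm ?g)\<^sup>2) = cinner ?g ?g" by (simp only: cinner_self_norm)
  also have "\<dots> = (\<Sum>k\<in>K. z k * cinner (s k) ?g)" by (simp add: cinner_sum_left cinner_scaleC_left)
  finally have eq: "complex_of_real ((norm ?g)\<^sup>2) = (\<Sum>k\<in>K. z k * cinner (s k) ?g)" .
  have "(norm ?g)\<^sup>2 = cmod (complex_of_real ((norm ?g)\<^sup>2))" by (simp add: norm_power)
  also have "\<dots> = cmod (\<Sum>k\<in>K. z k * cinner (s k) ?g)" by (simp only: eq)
  also have "\<dots> \<le> (\<Sum>k\<in>K. cmod (z k) * cmod (cinner ?g (s k)))"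
    by (rule order_trans[OF norm_sum]) (simp add: norm_mult cinner_commute[of "s _" ?g])
  also have "\<dots> \<le> L2_set (\<lambda>k. cmod (z k)) K * L2_set (\<lambda>k. cmod (cinner ?g (s k))) K"
    using L2_set_mult_ineq[of "\<lambda>k. cmod (z k)" "\<lambda>k. cmod (cinner ?g (s k))" K] by simp
  also have "L2_set (\<lambda>k. cmod (cinner ?g (s k))) K \<le> sqrt (B * (norm ?g)\<^sup>2)"
  proof -
    have "(\<Sum>k\<in>K. (cmod (cinner ?g (s k)))\<^sup>2) \<le> (\<Sum>k. (cmod (cinner ?g (s k)))\<^sup>2)"
      by (rule sum_le_suminf[OF frame_bounds(1)[OF gS]]) (auto simp: assms)
    also have "\<dots> \<le> B * (norm ?g)\<^sup>2" by (rule frame_bounds(3)[OF gS])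
    finally show ?thesis unfolding L2_set_def by simp
  qed
  finally have *: "(norm ?g)\<^sup>2 \<le> L2_set (\<lambda>k. cmod (z k)) K * sqrt (B * (norm ?g)\<^sup>2)"
    by (simp add: mult_left_mono L2_set_nonneg)
  have "sqrt (B * (norm ?g)\<^sup>2) = sqrt B * norm ?g" by (simp add: real_sqrt_mult)
  then have "norm ?g * norm ?g \<le> (L2_set (\<lambda>k. cmod (z k)) K * sqrt B) * norm ?g"
    using * by (simp add: power2_eq_square mult.assoc mult.commute mult.left_commute)
  then have "norm ?g \<le> L2_set (\<lambda>k. cmod (z k)) K * sqrt B"
    using B_pos by (cases "norm ?g = 0") (auto simp: mult_le_cancel_right L2_set_nonneg)
  then have "(norm ?g)\<^sup>2 \<le> (L2_set (\<lambda>k. cmod (z k)) K * sqrt B)\<^sup>2"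
    by (simp add: power_mono)
  also have "\<dots> = B * (\<Sum>k\<in>K. (cmod (z k))\<^sup>2)"
    using B_pos by (simp add: power_mult_distrib L2_set_def sum_nonneg)
  finally show ?thesis .
qed

lemma synth_summable:
  assumes z: "summable (\<lambda>k. (cmod (z k))\<^sup>2)"
  shows "summable (\<lambda>k. z k *\<^sub>C s k)"
proof -
  let ?P = "\<lambda>N. \<Sum>k<N. z k *\<^sub>C s k"
  have "Cauchy ?P"
  proof (rule CauchyI)
    fix \<epsilon> :: real assume e: "\<epsilon> > 0"
    have "\<epsilon>\<^sup>2 / B > 0" using e B_pos by simp
    moreover have "\<forall>e>0. \<exists>N. \<forall>m\<ge>N. \<forall>n. norm (\<Sum>k\<in>{m..<n}. (cmod (z k))\<^sup>2) < e"
      using z by (simp only: summable_Cauchy)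
    ultimately obtain N where N: "\<And>m n. m \<ge> N \<Longrightarrow> norm (\<Sum>k\<in>{m..<n}. (cmod (z k))\<^sup>2) < \<epsilon>\<^sup>2 / B"
      by blast
    have "norm (?P m - ?P n) < \<epsilon>" if "m \<ge> N" "n \<ge> N" for m n
    proof -
      have gen: "norm (?P a - ?P b) < \<epsilon>" if "a \<ge> N" "b \<ge> N" "b \<le> a" for a b
      proof -
        have un: "{..<a} = {..<b} \<union> {b..<a}" using that by auto
        have "?P a = ?P b + (\<Sum>k\<in>{b..<a}. z k *\<^sub>C s k)"
          unfolding un by (rule sum.union_disjoint) auto
        then have "?P a - ?P b = (\<Sum>k\<in>{b..<a}. z k *\<^sub>C s k)" by simp
        then have "(norm (?P a - ?P b))\<^sup>2 \<le> B * (\<Sum>k\<in>{b..<a}. (cmod (z k))\<^sup>2)"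
          using finite_synth_bound[of "{b..<a}" z] by simp
        also have "\<dots> < B * (\<epsilon>\<^sup>2 / B)"
          using N[OF that(2), of a] B_pos by (intro mult_strict_left_mono) (auto simp: sum_nonneg)
        also have "\<dots> = \<epsilon>\<^sup>2" using B_pos by simp
        finally show ?thesis using e by (simp add: power_less_imp_less_base)
      qed
      show ?thesis
      proof (cases "n \<le> m")
        case True then show ?thesis using gen that by simp
      next
        case False then show ?thesis using gen[of n m] that by (simp add: norm_minus_commute)
      qed
    qed
    then show "\<exists>M. \<forall>m\<ge>M. \<forall>n\<ge>M. norm (?P m - ?P n) < \<epsilon>" by blast
  qed
  then show ?thesis by (simp add: summable_iff_convergent Cauchy_convergent)
qed

lemma synth_bound:
  assumes z: "summable (\<lambda>k. (cmod (z k))\<^sup>2)"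
  shows "(norm (synth s z))\<^sup>2 \<le> B * (\<Sum>k. (cmod (z k))\<^sup>2)"
proof -
  have sums: "(\<lambda>N. \<Sum>k<N. z k *\<^sub>C s k) \<longlonglongrightarrow> synth s z"
    using synth_summable[OF z] unfolding synth_def by (simp add: summable_LIMSEQ)
  have "(\<lambda>N. (norm (\<Sum>k<N. z k *\<^sub>C s k))\<^sup>2) \<longlonglongrightarrow> (norm (synth s z))\<^sup>2"
    by (intro tendsto_intros sums)
  moreover have "\<forall>N. (norm (\<Sum>k<N. z k *\<^sub>C s k))\<^sup>2 \<le> B * (\<Sum>k. (cmod (z k))\<^sup>2)"
  proof
    fix N
    have "(norm (\<Sum>k<N. z k *\<^sub>C s k))\<^sup>2 \<le> B * (\<Sum>k<N. (cmod (z k))\<^sup>2)"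
      by (rule finite_synth_bound) simp
    also have "\<dots> \<le> B * (\<Sum>k. (cmod (z k))\<^sup>2)"
      using B_pos by (intro mult_left_mono sum_le_suminf[OF z]) auto
    finally show "(norm (\<Sum>k<N. z k *\<^sub>C s k))\<^sup>2 \<le> B * (\<Sum>k. (cmod (z k))\<^sup>2)" .
  qed
  ultimately show ?thesis by (intro LIMSEQ_le_const2) auto
qed

end

lemma cnorm_diff_zero_imp_eq:
  assumes "x \<in> Cn n" "y \<in> Cn n" "cnorm n (\<lambda>j. x j - y j) = 0"
  shows "x = y"
  using assms(3) cnorm_eq_0_iff[of n "\<lambda>j. x j - y j"] by (intro Cn_eqI[OF assms(1,2)]) auto

lemma clin_inj_from_bound:
  assumes T: "clin n T" and c: "c > 0" and b: "\<And>x. x \<in> Cn n \<Longrightarrow> c * cnorm n x \<le> cnorm n (T x)"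
  shows "inj_on T (Cn n)"
proof (rule inj_onI)
  fix x y assume x: "x \<in> Cn n" and y: "y \<in> Cn n" and eq: "T x = T y"
  have d: "(\<lambda>j. x j - y j) \<in> Cn n" using x y by (rule Cn_diff)
  have "T (\<lambda>j. x j - y j) = (\<lambda>k. T x k - T y k)" by (rule clin_diff[OF T x y])
  then have "T (\<lambda>j. x j - y j) = (\<lambda>_. 0)" using eq by simp
  then have "c * cnorm n (\<lambda>j. x j - y j) \<le> 0" using b[OF d] by (simp add: cnorm_def)
  then have "cnorm n (\<lambda>j. x j - y j) = 0" using c cnorm_nonneg[of n "\<lambda>j. x j - y j"]
    by (simp add: mult_le_0_iff)
  then show "x = y" by (rule cnorm_diff_zero_imp_eq[OF x y])
qed

lemma unit_vec_exists: "n \<ge> 1 \<Longrightarrow> e 0 \<in> Cn n \<and> cnorm n (e 0) = 1"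
  using e_in_Cn[of 0 n] cnorm_e[of 0 n] by simp

lemma mat_norm_le:
  assumes "n \<ge> 1" "\<And>y. y \<in> Cn n \<Longrightarrow> cnorm n y = 1 \<Longrightarrow> cnorm n (T y) \<le> K"
  shows "mat_norm n T \<le> K"
  unfolding mat_norm_def
proof (rule cSup_least)
  show "(\<lambda>y. cnorm n (T y)) ` {y \<in> Cn n. cnorm n y = 1} \<noteq> {}"
    using unit_vec_exists[OF assms(1)] by blast
  show "\<And>x. x \<in> (\<lambda>y. cnorm n (T y)) ` {y \<in> Cn n. cnorm n y = 1} \<Longrightarrow> x \<le> K"
    using assms(2) by blast
qed

lemma mat_norm_nonneg:
  assumes "n \<ge> 1" "\<And>y. y \<in> Cn n \<Longrightarrow> cnorm n y = 1 \<Longrightarrow> cnorm n (T y) \<le> K"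
  shows "0 \<le> mat_norm n T"
  unfolding mat_norm_def
proof (rule cSup_upper2)
  show "cnorm n (T (e 0)) \<in> (\<lambda>y. cnorm n (T y)) ` {y \<in> Cn n. cnorm n y = 1}"
    using unit_vec_exists[OF assms(1)] by blast
  show "0 \<le> cnorm n (T (e 0))" by (rule cnorm_nonneg)
  show "bdd_above ((\<lambda>y. cnorm n (T y)) ` {y \<in> Cn n. cnorm n y = 1})"
    using assms(2) by (intro bdd_aboveI[of _ K]) blast
qed

context setting
begin

lemma Sigma_apply: "Sigma s w n x = (\<lambda>i. if i < n then cinner (synth s (anal s (Wn w n x))) (w i) else 0)"
  by (simp add: Sigma_def Uop_def Uadj_def iota_adj_def synth_iota anal_def[of w])

lemma anal_Wn_summable: "summable (\<lambda>k. (cmod (anal s (Wn w n x) k))\<^sup>2)"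
  using frame_bounds(1)[OF Wn_in_S] by (simp add: anal_def)

lemma cinner_synth:
  assumes "summable (\<lambda>k. (cmod (z k))\<^sup>2)"
  shows "cinner (synth s z) h = (\<Sum>k. z k * cinner (s k) h)"
  unfolding synth_def using suminf_cinner_left[OF synth_summable[OF assms]]
  by (simp add: cinner_scaleC_left)

lemma cip_Sigma: "cip n (Sigma s w n x) y = cinner (synth s (anal s (Wn w n x))) (Wn w n y)"
  by (simp add: Sigma_apply cip_def cinner_Wn_right mult.commute)

lemma cip_Sigma_self: "cip n (Sigma s w n x) x = complex_of_real (\<Sum>k. (cmod (cinner (Wn w n x) (s k)))\<^sup>2)"
proof -
  have "cip n (Sigma s w n x) x = (\<Sum>k. anal s (Wn w n x) k * cinner (s k) (Wn w n x))"
    by (simp add: cip_Sigma cinner_synth[OF anal_Wn_summable])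
  also have "\<dots> = (\<Sum>k. complex_of_real ((cmod (cinner (Wn w n x) (s k)))\<^sup>2))"
    by (simp add: anal_def cinner_commute[of "s _" "Wn w n x"] cmod_sq_c)
  also have "\<dots> = complex_of_real (\<Sum>k. (cmod (cinner (Wn w n x) (s k)))\<^sup>2)"
  proof -
    have "complex_of_real (\<Sum>k. (cmod (cinner (Wn w n x) (s k)))\<^sup>2) = (\<Sum>k. complex_of_real ((cmod (cinner (Wn w n x) (s k)))\<^sup>2))"
      by (rule suminf_of_real[OF frame_bounds(1)[OF Wn_in_S[of x]]])
    then show ?thesis by simp
  qed
  finally show ?thesis .
qed

lemma Sigma_lower_quad: "A * C * (cnorm n x)\<^sup>2 \<le> Re (cip n (Sigma s w n x) x)"
proof -
  have "A * C * (cnorm n x)\<^sup>2 \<le> A * (norm (Wn w n x))\<^sup>2"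
    using riesz_Wn(1)[of x] A_pos by (simp add: mult.assoc)
  also have "\<dots> \<le> (\<Sum>k. (cmod (cinner (Wn w n x) (s k)))\<^sup>2)" by (rule frame_bounds(2)[OF Wn_in_S])
  finally show ?thesis by (simp add: cip_Sigma_self)
qed

lemma Sigma_upper_bilin: "cmod (cip n (Sigma s w n x) y) \<le> B * D * cnorm n x * cnorm n y"
proof -
  let ?z = "anal s (Wn w n x)"
  have 0: "cmod (cip n (Sigma s w n x) y) \<le> norm (synth s ?z) * norm (Wn w n y)"
    unfolding cip_Sigma by (rule cauchy_schwarz_c)
  have a: "(norm (synth s ?z))\<^sup>2 \<le> B * (\<Sum>k. (cmod (?z k))\<^sup>2)" by (rule synth_bound[OF anal_Wn_summable])
  have b: "(\<Sum>k. (cmod (?z k))\<^sup>2) \<le> B * (norm (Wn w n x))\<^sup>2"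
    using frame_bounds(3)[OF Wn_in_S[of x]] by (simp add: anal_def)
  have c: "(norm (Wn w n x))\<^sup>2 \<le> D * (cnorm n x)\<^sup>2" by (rule riesz_Wn(2))
  have "B * (\<Sum>k. (cmod (?z k))\<^sup>2) \<le> B * (B * (norm (Wn w n x))\<^sup>2)"
    by (rule mult_left_mono[OF b]) (use B_pos in simp)
  also have "\<dots> \<le> B * (B * (D * (cnorm n x)\<^sup>2))"
    by (intro mult_left_mono c) (use B_pos in auto)
  finally have 1: "(norm (synth s ?z))\<^sup>2 \<le> B * B * D * (cnorm n x)\<^sup>2"
    using a by (simp add: mult.assoc)
  have 2: "(norm (Wn w n y))\<^sup>2 \<le> D * (cnorm n y)\<^sup>2" by (rule riesz_Wn(2))
  have nn: "0 \<le> B * B * D * (cnorm n x)\<^sup>2" using B_pos D_pos by (intro mult_nonneg_nonneg) auto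
  have "(norm (synth s ?z) * norm (Wn w n y))\<^sup>2 \<le> (B * B * D * (cnorm n x)\<^sup>2) * (D * (cnorm n y)\<^sup>2)"
    unfolding power_mult_distrib by (rule mult_mono[OF 1 2 nn zero_le_power2])
  also have "\<dots> = (B * D * cnorm n x * cnorm n y)\<^sup>2" by (simp add: power2_eq_square)
  finally have sq: "(norm (synth s ?z) * norm (Wn w n y))\<^sup>2 \<le> (B * D * cnorm n x * cnorm n y)\<^sup>2" .
  have nn2: "0 \<le> B * D * cnorm n x * cnorm n y"
    using B_pos D_pos cnorm_nonneg[of n x] cnorm_nonneg[of n y] by (intro mult_nonneg_nonneg) auto
  have "norm (synth s ?z) * norm (Wn w n y) \<le> B * D * cnorm n x * cnorm n y"
    by (rule power2_le_imp_le[OF sq nn2])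
  then show ?thesis using 0 by linarith
qed

lemma Sigma_norm_upper: "cnorm n (Sigma s w n x) \<le> B * D * cnorm n x"
proof -
  let ?v = "Sigma s w n x"
  have "(cnorm n ?v)\<^sup>2 = cmod (cip n ?v ?v)" by (simp add: cip_self norm_power)
  also have "\<dots> \<le> B * D * cnorm n x * cnorm n ?v" by (rule Sigma_upper_bilin)
  finally have "cnorm n ?v * cnorm n ?v \<le> (B * D * cnorm n x) * cnorm n ?v" by (simp add: power2_eq_square)
  then show ?thesis using cnorm_nonneg[of n ?v] B_pos D_pos cnorm_nonneg[of n x]
    by (cases "cnorm n ?v = 0") (auto simp: mult_le_cancel_right)
qed

lemma Sigma_norm_lower: "A * C * cnorm n x \<le> cnorm n (Sigma s w n x)"
proof -
  let ?v = "Sigma s w n x"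
  have "A * C * (cnorm n x)\<^sup>2 \<le> Re (cip n ?v x)" by (rule Sigma_lower_quad)
  also have "\<dots> \<le> cmod (cip n ?v x)" by (rule complex_Re_le_cmod)
  also have "\<dots> \<le> cnorm n ?v * cnorm n x" by (rule cauchy_schwarz_cip)
  finally have "(A * C * cnorm n x) * cnorm n x \<le> cnorm n ?v * cnorm n x" by (simp add: power2_eq_square mult.assoc)
  then show ?thesis using cnorm_nonneg[of n x] A_pos C_pos cnorm_nonneg[of n ?v]
    by (cases "cnorm n x = 0") (auto simp: mult_le_cancel_right)
qed

lemma synth_anal_Wn:
  "synth s (anal s (Wn w n x)) = (\<Sum>l<n. x l *\<^sub>C synth s (anal s (w l)))"
proof -
  have sl: "summable (\<lambda>k. (cmod (anal s (w l) k))\<^sup>2)" for l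
    using frame_bounds(1)[OF w_in_S[of l]] by (simp add: anal_def)
  have "synth s (anal s (Wn w n x)) = (\<Sum>k. \<Sum>l<n. x l *\<^sub>C (anal s (w l) k *\<^sub>C s k))"
    unfolding synth_def by (simp add: anal_def cinner_Wn_left scaleC_sum_left scaleC_scaleC)
  also have "\<dots> = (\<Sum>l<n. \<Sum>k. x l *\<^sub>C (anal s (w l) k *\<^sub>C s k))"
    by (rule suminf_sum) (intro summable_scaleC synth_summable[OF sl])
  also have "\<dots> = (\<Sum>l<n. x l *\<^sub>C synth s (anal s (w l)))"
    unfolding synth_def by (intro sum.cong refl suminf_scaleC[symmetric] synth_summable[OF sl])
  finally show ?thesis .
qed

lemma Sigma_clin: "clin n (Sigma s w n)"
  unfolding clin_def
proof (intro conjI ballI)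
  fix x :: "nat \<Rightarrow> complex" assume "x \<in> Cn n"
  show "Sigma s w n x \<in> Cn n" by (simp add: Sigma_apply Cn_def)
  show "Sigma s w n x = (\<lambda>i. \<Sum>l<n. x l * Sigma s w n (e l) i)"
    by (rule ext) (simp add: Sigma_apply synth_anal_Wn Wn_e cinner_sum_left cinner_scaleC_left)
qed

lemma Sigma_inj: "inj_on (Sigma s w n) (Cn n)"
  using clin_inj_from_bound[OF Sigma_clin, of "A * C"] A_pos C_pos Sigma_norm_lower by auto

lemma Sigma_bij: "bij_betw (Sigma s w n) (Cn n) (Cn n)"
  by (rule clin_bij[OF Sigma_clin Sigma_inj])

lemma Sigma_facts:
  assumes n: "n \<ge> 1"
  shows "mat_norm n (Sigma s w n) \<le> B * D
     \<and> bij_betw (Sigma s w n) (Cn n) (Cn n)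
     \<and> mat_norm n (inv_into (Cn n) (Sigma s w n)) \<le> 1 / (A * C)
     \<and> mat_norm n (Sigma s w n) * mat_norm n (inv_into (Cn n) (Sigma s w n)) \<le> (B * D) / (A * C)"
proof -
  have b1: "cnorm n (Sigma s w n y) \<le> B * D" if "y \<in> Cn n" "cnorm n y = 1" for y
    using Sigma_norm_upper[of y] that by simp
  have b2: "cnorm n (inv_into (Cn n) (Sigma s w n) z) \<le> 1 / (A * C)" if z: "z \<in> Cn n" "cnorm n z = 1" for z
  proof -
    let ?y = "inv_into (Cn n) (Sigma s w n) z"
    have "Sigma s w n ?y = z" by (rule bij_betw_inv_into_right[OF Sigma_bij z(1)])
    then have "A * C * cnorm n ?y \<le> 1" using Sigma_norm_lower[of ?y] z(2) by simp
    then show ?thesis using A_pos C_pos by (simp add: field_simps)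
  qed
  have m1: "mat_norm n (Sigma s w n) \<le> B * D" by (rule mat_norm_le[OF n b1])
  have m2: "mat_norm n (inv_into (Cn n) (Sigma s w n)) \<le> 1 / (A * C)" by (rule mat_norm_le[OF n b2])
  have p1: "0 \<le> mat_norm n (Sigma s w n)" by (rule mat_norm_nonneg[OF n b1])
  have p2: "0 \<le> mat_norm n (inv_into (Cn n) (Sigma s w n))" by (rule mat_norm_nonneg[OF n b2])
  have "mat_norm n (Sigma s w n) * mat_norm n (inv_into (Cn n) (Sigma s w n)) \<le> (B * D) * (1 / (A * C))"
    by (rule mult_mono[OF m1 m2]) (use p1 p2 B_pos D_pos in auto)
  then show ?thesis using m1 m2 Sigma_bij by simp
qed

end

lemma orth_comp_diff: "x \<in> orth_comp X \<Longrightarrow> y \<in> orth_comp X \<Longrightarrow> x - y \<in> orth_comp X"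
  by (simp add: orth_comp_def cinner_diff_left)

lemma orth_comp_add: "x \<in> orth_comp X \<Longrightarrow> y \<in> orth_comp X \<Longrightarrow> x + y \<in> orth_comp X"
  by (simp add: orth_comp_def cinner_add_left)

lemma orth_comp_scaleR: "x \<in> orth_comp X \<Longrightarrow> r *\<^sub>R x \<in> orth_comp X"
  by (simp add: orth_comp_def cinner_scaleR_left)

lemma orth_comp_zero: "0 \<in> orth_comp X"
  by (simp add: orth_comp_def)

lemma orth_proj_eq:
  fixes X :: "'a::complex_inner set"
  assumes "y \<in> orth_comp X" "x - y \<in> orth_comp (orth_comp X)"
  shows "orth_proj (orth_comp X) x = y"
  unfolding orth_proj_def
proof (rule the_equality)
  show "y \<in> orth_comp X \<and> x - y \<in> orth_comp (orth_comp X)" using assms by simp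
  fix y' assume y': "y' \<in> orth_comp X \<and> x - y' \<in> orth_comp (orth_comp X)"
  have d1: "y' - y \<in> orth_comp X" using y' assms(1) by (simp add: orth_comp_diff)
  have eq: "y' - y = (x - y) - (x - y')" by (simp add: algebra_simps)
  have d2: "y' - y \<in> orth_comp (orth_comp X)"
    by (subst eq) (rule orth_comp_diff[OF assms(2)], use y' in blast)
  have "cinner (y' - y) (y' - y) = 0" using d1 d2 by (simp add: orth_comp_def)
  then have "norm (y' - y) = 0" by (simp add: cinner_self_norm)
  then show "y' = y" by simp
qed

context setting
begin

definition Gop :: "(nat \<Rightarrow> complex) \<Rightarrow> (nat \<Rightarrow> complex)" where
  "Gop x = (\<lambda>i. if i < n then cinner (Wn w n x) (w i) else 0)"

lemma Gop_clin: "clin n Gop"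
  unfolding clin_def
proof (intro conjI ballI)
  fix x :: "nat \<Rightarrow> complex" assume "x \<in> Cn n"
  show "Gop x \<in> Cn n" by (simp add: Gop_def Cn_def)
  show "Gop x = (\<lambda>i. \<Sum>l<n. x l * Gop (e l) i)"
    by (rule ext) (simp add: Gop_def cinner_Wn_left Wn_e)
qed

lemma Gop_lower: "C * cnorm n x \<le> cnorm n (Gop x)"
proof -
  have "cip n (Gop x) x = cinner (Wn w n x) (Wn w n x)"
    by (simp add: Gop_def cip_def cinner_Wn_right mult.commute)
  then have "Re (cip n (Gop x) x) = (norm (Wn w n x))\<^sup>2" by (simp add: cinner_self_Re)
  then have "C * (cnorm n x)\<^sup>2 \<le> Re (cip n (Gop x) x)" using riesz_Wn(1)[of x] by simp
  also have "\<dots> \<le> cmod (cip n (Gop x) x)" by (rule complex_Re_le_cmod)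
  also have "\<dots> \<le> cnorm n (Gop x) * cnorm n x" by (rule cauchy_schwarz_cip)
  finally have "(C * cnorm n x) * cnorm n x \<le> cnorm n (Gop x) * cnorm n x" by (simp add: power2_eq_square mult.assoc)
  then show ?thesis using cnorm_nonneg[of n x] C_pos cnorm_nonneg[of n "Gop x"]
    by (cases "cnorm n x = 0") (auto simp: mult_le_cancel_right)
qed

lemma Gop_inj: "inj_on Gop (Cn n)"
  using clin_inj_from_bound[OF Gop_clin, of C] C_pos Gop_lower by auto

lemma Gop_bij: "bij_betw Gop (Cn n) (Cn n)"
  by (rule clin_bij[OF Gop_clin Gop_inj])

definition coefW :: "'h \<Rightarrow> (nat \<Rightarrow> complex)" where
  "coefW h = inv_into (Cn n) Gop (\<lambda>i. if i < n then cinner h (w i) else 0)"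

lemma coefW_prop: "i < n \<Longrightarrow> cinner (Wn w n (coefW h)) (w i) = cinner h (w i)"
proof -
  assume i: "i < n"
  have mem: "(\<lambda>i. if i < n then cinner h (w i) else 0) \<in> Cn n" by (simp add: Cn_def)
  have "Gop (coefW h) = (\<lambda>i. if i < n then cinner h (w i) else 0)"
    unfolding coefW_def by (rule bij_betw_inv_into_right[OF Gop_bij mem])
  then have "Gop (coefW h) i = cinner h (w i)" using i by simp
  then show ?thesis using i by (simp add: Gop_def)
qed

abbreviation Mperp where "Mperp \<equiv> orth_comp (cspan (w ` {..<n}))"

lemma perp_w_imp_perp_span:
  assumes "\<And>i. i < n \<Longrightarrow> cinner y (w i) = 0"
  shows "y \<in> Mperp"
  unfolding orth_comp_def
proof (intro CollectI ballI)
  fix z assume "z \<in> cspan (w ` {..<n})"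
  then obtain F c where F: "finite F" "F \<subseteq> w ` {..<n}" "z = (\<Sum>v\<in>F. c v *\<^sub>C v)"
    unfolding cspan_def by blast
  have "cinner y z = (\<Sum>v\<in>F. cnj (c v) * cinner y v)" by (simp add: F(3) cinner_sum_right cinner_scaleC_right)
  also have "\<dots> = 0" using F(2) assms by (intro sum.neutral) auto
  finally show "cinner y z = 0" .
qed

lemma w_in_span: "i < n \<Longrightarrow> w i \<in> cspan (w ` {..<n})"
proof -
  assume i: "i < n"
  have "w i = (\<Sum>k\<in>{i}. 1 *\<^sub>C w k)" by (simp add: scaleC_one)
  also have "\<dots> \<in> cspan (w ` {..<n})" by (rule cspan_sum) (use i in auto)
  finally show ?thesis .
qed

lemma Wn_in_perpperp: "Wn w n x \<in> orth_comp Mperp"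
proof -
  have "cinner (Wn w n x) y = 0" if y: "y \<in> Mperp" for y
  proof -
    have "cinner y (w l) = 0" if "l < n" for l using y w_in_span[OF that] by (simp add: orth_comp_def)
    then have wl: "cinner (w l) y = 0" if "l < n" for l using that cinner_commute[of "w l" y] by simp
    have "(\<Sum>l<n. x l * cinner (w l) y) = 0" by (intro sum.neutral) (simp add: wl)
    then show ?thesis by (simp add: cinner_Wn_left)
  qed
  then show ?thesis by (simp only: orth_comp_def[of Mperp] mem_Collect_eq) blast
qed

lemma Pperp_formula: "Pperp w n h = h - Wn w n (coefW h)"
proof -
  have "h - Wn w n (coefW h) \<in> Mperp"
    by (rule perp_w_imp_perp_span) (simp add: cinner_diff_left coefW_prop)
  moreover have "h - (h - Wn w n (coefW h)) \<in> orth_comp Mperp" using Wn_in_perpperp by simp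
  ultimately show ?thesis unfolding Pperp_def by (rule orth_proj_eq)
qed

lemma Pperp_in: "Pperp w n h \<in> Mperp"
  unfolding Pperp_formula by (rule perp_w_imp_perp_span) (simp add: cinner_diff_left coefW_prop)

lemma Pperp_perp_w: "i < n \<Longrightarrow> cinner (Pperp w n h) (w i) = 0"
  by (simp add: Pperp_formula cinner_diff_left coefW_prop)

lemma Pperp_idem: "Pperp w n (Pperp w n h) = Pperp w n h"
  unfolding Pperp_def by (rule orth_proj_eq) (use Pperp_in[unfolded Pperp_def] orth_comp_zero in auto)

lemma Pperp_add: "Pperp w n (x + y) = Pperp w n x + Pperp w n y"
  unfolding Pperp_def
proof (rule orth_proj_eq)
  show "orth_proj Mperp x + orth_proj Mperp y \<in> Mperp"
    by (rule orth_comp_add[OF Pperp_in[unfolded Pperp_def] Pperp_in[unfolded Pperp_def]])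
  have "x - orth_proj Mperp x \<in> orth_comp Mperp" "y - orth_proj Mperp y \<in> orth_comp Mperp"
    using Wn_in_perpperp by (simp_all add: Pperp_formula[unfolded Pperp_def])
  then have "(x - orth_proj Mperp x) + (y - orth_proj Mperp y) \<in> orth_comp Mperp" by (rule orth_comp_add)
  then show "x + y - (orth_proj Mperp x + orth_proj Mperp y) \<in> orth_comp Mperp" by (simp add: algebra_simps)
qed

lemma Pperp_scaleR: "Pperp w n (r *\<^sub>R x) = r *\<^sub>R Pperp w n x"
  unfolding Pperp_def
proof (rule orth_proj_eq)
  show "r *\<^sub>R orth_proj Mperp x \<in> Mperp"
    by (rule orth_comp_scaleR[OF Pperp_in[unfolded Pperp_def]])
  have "x - orth_proj Mperp x \<in> orth_comp Mperp"
    using Wn_in_perpperp by (simp add: Pperp_formula[unfolded Pperp_def])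
  then have "r *\<^sub>R (x - orth_proj Mperp x) \<in> orth_comp Mperp" by (rule orth_comp_scaleR)
  then show "r *\<^sub>R x - r *\<^sub>R orth_proj Mperp x \<in> orth_comp Mperp" by (simp add: algebra_simps)
qed

lemma Pperp_norm: "norm (Pperp w n h) \<le> norm h"
proof -
  have orth: "cinner (Pperp w n h) (Wn w n (coefW h)) = 0"
    by (simp add: cinner_Wn_right Pperp_perp_w)
  have "h = Pperp w n h + Wn w n (coefW h)" by (simp add: Pperp_formula)
  then have "(norm h)\<^sup>2 = (norm (Pperp w n h))\<^sup>2 + (norm (Wn w n (coefW h)))\<^sup>2"
    using pythagoras[OF orth] by metis
  then have "(norm (Pperp w n h))\<^sup>2 \<le> (norm h)\<^sup>2" by simp
  then show ?thesis by (simp add: power2_le_iff_abs_le)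
qed

lemma Pperp_bounded_linear: "bounded_linear (Pperp w n)"
  by (rule bounded_linear_intro[where K = 1]) (simp_all add: Pperp_add Pperp_scaleR Pperp_norm)

end

definition kap :: "nat pmf \<Rightarrow> nat \<Rightarrow> (nat \<Rightarrow> nat) \<Rightarrow> nat \<Rightarrow> complex" where
  "kap p m om t = complex_of_real (1 / (real m * pmf p (om t)))"

lemma synth_Qop:
  "synth s (Qop p m om z) = (\<Sum>t<m. (kap p m om t * z (om t)) *\<^sub>C s (om t))"
proof -
  have qterm: "Qop p m om z k *\<^sub>C s k = (\<Sum>t<m. if om t = k then (kap p m om t * z (om t)) *\<^sub>C s (om t) else 0)" for k
  proof -
    have "Qop p m om z k = (\<Sum>t<m. if om t = k then kap p m om t * z (om t) else 0)"
      by (simp add: Qop_def kap_def sum_distrib_left if_distrib[of "\<lambda>c. _ * c"] cong: if_cong)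
    then show ?thesis by (simp add: scaleC_sum_left if_distrib[of "\<lambda>c. c *\<^sub>C _"] cong: if_cong)
  qed
  have "synth s (Qop p m om z) = (\<Sum>k\<in>om ` {..<m}. Qop p m om z k *\<^sub>C s k)"
    unfolding synth_def by (rule suminf_finite) (auto simp: qterm intro!: sum.neutral)
  also have "\<dots> = (\<Sum>k\<in>om ` {..<m}. \<Sum>t<m. if om t = k then (kap p m om t * z (om t)) *\<^sub>C s (om t) else 0)"
    by (simp add: qterm)
  also have "\<dots> = (\<Sum>t<m. \<Sum>k\<in>om ` {..<m}. if om t = k then (kap p m om t * z (om t)) *\<^sub>C s (om t) else 0)"
    by (rule sum.swap)
  also have "\<dots> = (\<Sum>t<m. (kap p m om t * z (om t)) *\<^sub>C s (om t))"
    by (intro sum.cong refl) (simp add: sum.delta)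
  finally show ?thesis .
qed

lemma synth_e: "synth s (e j) = s j"
proof -
  have "synth s (e j) = (\<Sum>k\<in>{j}. e j k *\<^sub>C s k)"
    unfolding synth_def by (rule suminf_finite) (auto simp: e_def)
  then show ?thesis by (simp add: e_def scaleC_one)
qed

lemma vvec_apply: "vvec s w n j = (\<lambda>i. if i < n then cinner (s j) (w i) else 0)"
  by (simp add: vvec_def Uadj_def iota_adj_def anal_def synth_e)

lemma cip_vvec: "cip n x (vvec s w n j) = cinner (Wn w n x) (s j)"
  by (simp add: vvec_apply cip_def cinner_Wn_left cinner_commute[of "s j" "w _"])

lemma Sigma_hat_apply:
  "Sigma_hat s w n p m om x = (\<lambda>i. if i < n then
      (\<Sum>t<m. kap p m om t * cinner (Wn w n x) (s (om t)) * cinner (s (om t)) (w i)) else 0)"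
  by (simp add: Sigma_hat_def Uop_def Uadj_def iota_adj_def synth_iota anal_def[of w] synth_Qop
      cinner_sum_left cinner_scaleC_left anal_def[of s])

lemma Gamma_hat_apply:
  "Gamma_hat s w n p m om h = (\<lambda>i. if i < n then
      (\<Sum>t<m. kap p m om t * cinner (Pperp w n h) (s (om t)) * cinner (s (om t)) (w i)) else 0)"
  by (simp add: Gamma_hat_def Uadj_def iota_adj_def anal_def[of w] synth_Qop
      cinner_sum_left cinner_scaleC_left anal_def[of s])

lemma wls_obj_apply:
  "wls_obj s w n p m om f x = (\<Sum>t<m. (1 / pmf p (om t)) * (cmod (cinner (Wn w n x) (s (om t)) - cinner f (s (om t))))\<^sup>2)"
  by (simp add: wls_obj_def synth_iota)

lemma cmod_add_sq: "(cmod (a + d))\<^sup>2 = (cmod a)\<^sup>2 + (cmod d)\<^sup>2 + 2 * Re (a * cnj d)"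
  unfolding cmod_power2 by (simp add: power2_eq_square algebra_simps)

locale sampling = setting s w A B C D n
  for s w :: "nat \<Rightarrow> 'h::{complex_inner, complete_space}" and A B C D :: real and n :: nat +
  fixes p :: "nat pmf"
  assumes A_iii: "\<And>j. vvec s w n j \<noteq> (\<lambda>_. 0) \<Longrightarrow> pmf p j > 0"
begin

definition GSQ :: "(nat \<Rightarrow> nat) \<Rightarrow> nat \<Rightarrow> (nat \<Rightarrow> complex) list" where
  "GSQ om t = foldl (\<lambda>Q i. gs_step n Q (vvec s w n (om i))) [] [0..<t]"

lemma GSQ_0: "GSQ om 0 = []" by (simp add: GSQ_def)
lemma GSQ_Suc: "GSQ om (Suc t) = gs_step n (GSQ om t) (vvec s w n (om t))" by (simp add: GSQ_def)

lemma GSQ_orth: "orthonormal n (GSQ om t)"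
proof (induction t)
  case 0 show ?case by (simp add: GSQ_0 orthonormal_def)
next
  case (Suc t) then show ?case by (simp add: GSQ_Suc gs_step_orthonormal)
qed

lemma GSQ_perp:
  assumes "\<forall>t'<t. cip n d (vvec s w n (om t')) = 0"
  shows "\<forall>i<length (GSQ om t). cip n d (GSQ om t ! i) = 0"
  using assms
proof (induction t)
  case 0 then show ?case by (simp add: GSQ_0)
next
  case (Suc t)
  let ?Q = "GSQ om t" let ?v = "vvec s w n (om t)"
  have IH: "\<forall>i<length ?Q. cip n d (?Q ! i) = 0" using Suc by auto
  have dv: "cip n d ?v = 0" using Suc.prems by auto
  have "cip n d (proj n ?Q ?v) = 0"
    unfolding proj_def cip_lincomb_right using dv IH by simp
  then have new: "cip n d (\<lambda>k. proj n ?Q ?v k / complex_of_real (cnorm n (proj n ?Q ?v))) = 0"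
    by (simp add: cip_div_right)
  show ?case
    using IH new by (auto simp: GSQ_Suc gs_step_def nth_append less_Suc_eq)
qed

lemma SH_cip_gen:
  "cip n (\<lambda>i. if i < n then (\<Sum>t<m. kap p m om t * cinner g (s (om t)) * cinner (s (om t)) (w i)) else 0) y
   = (\<Sum>t<m. kap p m om t * cinner g (s (om t)) * cnj (cinner (Wn w n y) (s (om t))))"
proof -
  have "cip n (\<lambda>i. if i < n then (\<Sum>t<m. kap p m om t * cinner g (s (om t)) * cinner (s (om t)) (w i)) else 0) y
      = (\<Sum>i<n. \<Sum>t<m. kap p m om t * cinner g (s (om t)) * (cnj (y i) * cinner (s (om t)) (w i)))"
    by (simp add: cip_def sum_distrib_left sum_distrib_right mult_ac)
  also have "\<dots> = (\<Sum>t<m. kap p m om t * cinner g (s (om t)) * (\<Sum>i<n. cnj (y i) * cinner (s (om t)) (w i)))"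
    by (subst sum.swap) (simp add: sum_distrib_left)
  also have "\<dots> = (\<Sum>t<m. kap p m om t * cinner g (s (om t)) * cnj (cinner (Wn w n y) (s (om t))))"
    by (simp add: cinner_Wn_right[symmetric] cinner_commute[of "s _" "Wn w n y"])
  finally show ?thesis .
qed

lemma SH_cip: "cip n (Sigma_hat s w n p m om x) y
   = (\<Sum>t<m. kap p m om t * cinner (Wn w n x) (s (om t)) * cnj (cinner (Wn w n y) (s (om t))))"
  unfolding Sigma_hat_apply by (rule SH_cip_gen)

lemma SH_clin: "clin n (Sigma_hat s w n p m om)"
  unfolding clin_def
proof (intro conjI ballI)
  fix x :: "nat \<Rightarrow> complex" assume "x \<in> Cn n"
  show "Sigma_hat s w n p m om x \<in> Cn n" by (simp add: Sigma_hat_apply Cn_def)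
  show "Sigma_hat s w n p m om x = (\<lambda>i. \<Sum>l<n. x l * Sigma_hat s w n p m om (e l) i)"
  proof (rule ext)
    fix i
    show "Sigma_hat s w n p m om x i = (\<Sum>l<n. x l * Sigma_hat s w n p m om (e l) i)"
    proof (cases "i < n")
      case False then show ?thesis by (simp add: Sigma_hat_apply)
    next
      case True
      have "Sigma_hat s w n p m om x i = (\<Sum>t<m. \<Sum>l<n. x l * (kap p m om t * cinner (w l) (s (om t)) * cinner (s (om t)) (w i)))"
        using True by (simp add: Sigma_hat_apply cinner_Wn_left sum_distrib_right sum_distrib_left mult_ac)
      also have "\<dots> = (\<Sum>l<n. x l * (\<Sum>t<m. kap p m om t * cinner (w l) (s (om t)) * cinner (s (om t)) (w i)))"
        by (subst sum.swap) (simp add: sum_distrib_left)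
      also have "\<dots> = (\<Sum>l<n. x l * Sigma_hat s w n p m om (e l) i)"
        using True by (intro sum.cong refl) (simp add: Sigma_hat_apply Wn_e)
      finally show ?thesis .
    qed
  qed
qed

lemma kap_real: "kap p m om t = complex_of_real (1 / (real m * pmf p (om t)))"
  by (simp add: kap_def)

lemma SH_inj:
  assumes full: "length (GSQ om m) = n"
  shows "inj_on (Sigma_hat s w n p m om) (Cn n)"
proof (rule inj_onI)
  fix x y assume x: "x \<in> Cn n" and y: "y \<in> Cn n" and eq: "Sigma_hat s w n p m om x = Sigma_hat s w n p m om y"
  let ?d = "\<lambda>j. x j - y j"
  have dmem: "?d \<in> Cn n" using x y by (rule Cn_diff)
  have "Sigma_hat s w n p m om ?d = (\<lambda>k. Sigma_hat s w n p m om x k - Sigma_hat s w n p m om y k)"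
    by (rule clin_diff[OF SH_clin x y])
  then have Sd: "Sigma_hat s w n p m om ?d = (\<lambda>_. 0)" using eq by simp
  have "cip n (Sigma_hat s w n p m om ?d) ?d = 0" by (simp add: Sd cip_def)
  then have "(\<Sum>t<m. kap p m om t * cinner (Wn w n ?d) (s (om t)) * cnj (cinner (Wn w n ?d) (s (om t)))) = 0"
    by (simp add: SH_cip)
  then have "complex_of_real (\<Sum>t<m. (1 / (real m * pmf p (om t))) * (cmod (cinner (Wn w n ?d) (s (om t))))\<^sup>2) = 0"
    by (simp add: kap_real mult.assoc cmod_sq_c)
  then have zero: "(\<Sum>t<m. (1 / (real m * pmf p (om t))) * (cmod (cinner (Wn w n ?d) (s (om t))))\<^sup>2) = 0"
    by (simp only: of_real_eq_0_iff)
  have each: "(1 / (real m * pmf p (om t))) * (cmod (cinner (Wn w n ?d) (s (om t))))\<^sup>2 = 0" if t: "t < m" for t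
    using zero t by (subst (asm) sum_nonneg_eq_0_iff) (auto simp: pmf_nonneg)
  have perp: "\<forall>t'<m. cip n ?d (vvec s w n (om t')) = 0"
  proof (intro allI impI)
    fix t assume t: "t < m"
    show "cip n ?d (vvec s w n (om t)) = 0"
    proof (cases "pmf p (om t) > 0")
      case True
      then have pos: "1 / (real m * pmf p (om t)) > 0" using t by simp
      have "(1 / (real m * pmf p (om t))) * (cmod (cinner (Wn w n ?d) (s (om t))))\<^sup>2 = 0" by (rule each[OF t])
      then have "(cmod (cinner (Wn w n ?d) (s (om t))))\<^sup>2 = 0" using True t by auto
      then have "cinner (Wn w n ?d) (s (om t)) = 0" by simp
      then show ?thesis by (simp add: cip_vvec)
    next
      case False
      then have "vvec s w n (om t) = (\<lambda>_. 0)" using A_iii by blast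
      then show ?thesis by (simp add: cip_def)
    qed
  qed
  have perp': "\<forall>i<n. cip n ?d (GSQ om m ! i) = 0" using GSQ_perp[OF perp] full by simp
  have "\<forall>k<n. ?d k = 0"
  proof (intro allI impI)
    fix k assume k: "k < n"
    have "proj n (GSQ om m) ?d k = 0" by (rule gs_full[OF GSQ_orth full k])
    then show "?d k = 0" using perp' full by (simp add: proj_def)
  qed
  then have "?d = (\<lambda>_. 0)" using dmem zero_in_Cn by (intro Cn_eqI) auto
  then show "x = y" by (simp add: fun_eq_iff)
qed

end

lemma Wn_lincomb: "Wn w n (\<lambda>j. \<Sum>i\<in>I. \<beta> i * a i j) = (\<Sum>i\<in>I. \<beta> i *\<^sub>C Wn w n (a i))"
  by (simp add: Wn_def scaleC_sum_left scaleC_sum_right scaleC_scaleC sum.swap[of _ I])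

context sampling
begin

lemma wls_good:
  assumes bij: "bij_betw (Sigma_hat s w n p m om) (Cn n) (Cn n)"
  shows "\<exists>x. is_wls_solution s w n p m om f x
                    \<and> (\<forall>y. is_wls_solution s w n p m om f y \<longrightarrow> y = x)
                    \<and> norm (f - synth w (iota n x))
                        \<le> norm (Pperp w n f) * sqrt (1 + (onorm (\<lambda>h. synth w (iota n
                              (inv_into (Cn n) (Sigma_hat s w n p m om) (Gamma_hat s w n p m om h)))))\<^sup>2)"
proof -
  let ?SH = "Sigma_hat s w n p m om" let ?GH = "Gamma_hat s w n p m om"
  let ?Inv = "inv_into (Cn n) ?SH"
  let ?L = "\<lambda>h. synth w (iota n (?Inv (?GH h)))"
  have inj: "inj_on ?SH (Cn n)" using bij by (rule bij_betw_imp_inj_on)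
  have Invmem: "?Inv z \<in> Cn n" if "z \<in> Cn n" for z
    using bij that by (metis bij_betw_def inv_into_into)
  have SHInv: "?SH (?Inv z) = z" if "z \<in> Cn n" for z by (rule bij_betw_inv_into_right[OF bij that])
  have GHmem: "?GH h \<in> Cn n" for h by (simp add: Gamma_hat_apply Cn_def)
  define y0 where "y0 = coefW f"
  have y0mem: "y0 \<in> Cn n"
  proof -
    have mem: "(\<lambda>i. if i < n then cinner f (w i) else 0) \<in> Cn n" by (simp add: Cn_def)
    show ?thesis unfolding y0_def coefW_def using Gop_bij mem by (metis bij_betw_def inv_into_into)
  qed
  define z where "z = ?Inv (?GH f)"
  have zmem: "z \<in> Cn n" unfolding z_def by (rule Invmem[OF GHmem])
  have SHz: "?SH z = ?GH f" unfolding z_def by (rule SHInv[OF GHmem])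
  define xt where "xt = (\<lambda>j. y0 j + z j)"
  have xtmem: "xt \<in> Cn n" unfolding xt_def using y0mem zmem by (rule Cn_add)
  define b where "b = (\<lambda>i. if i < n then (\<Sum>t<m. kap p m om t * cinner f (s (om t)) * cinner (s (om t)) (w i)) else 0)"
  have fdec: "f = Wn w n y0 + Pperp w n f" by (simp add: Pperp_formula y0_def)
  have SHxt: "?SH xt = b"
  proof -
    have "?SH xt = (\<lambda>k. ?SH y0 k + ?SH z k)" unfolding xt_def by (rule clin_add[OF SH_clin y0mem zmem])
    also have "\<dots> = b"
    proof (rule ext)
      fix i
      have "cinner f (s (om t)) = cinner (Wn w n y0) (s (om t)) + cinner (Pperp w n f) (s (om t))" for t
        by (subst fdec) (simp add: cinner_add_left)
      then show "?SH y0 i + ?SH z i = b i"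
        unfolding SHz by (simp add: Sigma_hat_apply Gamma_hat_apply b_def sum.distrib[symmetric] algebra_simps)
    qed
    finally show ?thesis .
  qed
  define a where "a t = cinner (Wn w n xt) (s (om t)) - cinner f (s (om t))" for t
  define obj where "obj x = wls_obj s w n p m om f x" for x
  have expand: "obj y = obj xt + (\<Sum>t<m. (1 / pmf p (om t)) * (cmod (cinner (Wn w n (\<lambda>j. y j - xt j)) (s (om t))))\<^sup>2)"
    if ymem: "y \<in> Cn n" for y
  proof -
    let ?\<delta> = "\<lambda>j. y j - xt j"
    define d where "d t = cinner (Wn w n ?\<delta>) (s (om t))" for t
    have dd: "d t = cinner (Wn w n y) (s (om t)) - cinner (Wn w n xt) (s (om t))" for t
      by (simp add: d_def Wn_diff cinner_diff_left)
    have orthc: "(\<Sum>t<m. kap p m om t * a t * cnj (d t)) = 0"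
    proof -
      have "(\<Sum>t<m. kap p m om t * a t * cnj (d t)) =
          (\<Sum>t<m. kap p m om t * cinner (Wn w n xt) (s (om t)) * cnj (cinner (Wn w n ?\<delta>) (s (om t))))
        - (\<Sum>t<m. kap p m om t * cinner f (s (om t)) * cnj (cinner (Wn w n ?\<delta>) (s (om t))))"
        by (simp add: a_def d_def algebra_simps sum_subtractf)
      also have "\<dots> = cip n (?SH xt) ?\<delta> - cip n b ?\<delta>"
        by (simp only: SH_cip b_def SH_cip_gen)
      also have "\<dots> = 0" by (simp add: SHxt)
      finally show ?thesis .
    qed
    have orthr: "(\<Sum>t<m. (1 / pmf p (om t)) * Re (a t * cnj (d t))) = 0"
    proof (cases "m = 0")
      case True then show ?thesis by simp
    next
      case False
      have "Re (\<Sum>t<m. kap p m om t * a t * cnj (d t)) = (\<Sum>t<m. (1 / (real m * pmf p (om t))) * Re (a t * cnj (d t)))"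
        by (simp add: kap_real Re_sum mult.assoc)
      then have h1: "(\<Sum>t<m. (1 / (real m * pmf p (om t))) * Re (a t * cnj (d t))) = 0" using orthc by simp
      have h2: "real m * (\<Sum>t<m. (1 / (real m * pmf p (om t))) * Re (a t * cnj (d t)))
          = (\<Sum>t<m. (1 / pmf p (om t)) * Re (a t * cnj (d t)))"
        using False by (simp add: sum_distrib_left)
      show ?thesis using h1 h2 by (metis mult_zero_right)
    qed
    have "obj y = (\<Sum>t<m. (1 / pmf p (om t)) * (cmod (a t + d t))\<^sup>2)"
      unfolding obj_def wls_obj_apply by (intro sum.cong refl) (simp add: a_def dd)
    also have "\<dots> = (\<Sum>t<m. (1 / pmf p (om t)) * (cmod (a t))\<^sup>2) + (\<Sum>t<m. (1 / pmf p (om t)) * (cmod (d t))\<^sup>2)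
        + 2 * (\<Sum>t<m. (1 / pmf p (om t)) * Re (a t * cnj (d t)))"
      by (simp add: cmod_add_sq algebra_simps sum.distrib sum_distrib_left)
    also have "(\<Sum>t<m. (1 / pmf p (om t)) * (cmod (a t))\<^sup>2) = obj xt"
      unfolding obj_def wls_obj_apply by (simp add: a_def)
    finally show ?thesis using orthr by (simp add: d_def)
  qed
  have sol: "is_wls_solution s w n p m om f xt"
  proof -
    have "obj xt \<le> obj y" if "y \<in> Cn n" for y
      using expand[OF that] by (simp add: sum_nonneg pmf_nonneg)
    then show ?thesis using xtmem by (simp add: is_wls_solution_def obj_def)
  qed
  have uniq: "y = xt" if ys: "is_wls_solution s w n p m om f y" for y
  proof -
    have ymem: "y \<in> Cn n" using ys by (simp add: is_wls_solution_def)
    have "obj y \<le> obj xt" using ys xtmem by (simp add: is_wls_solution_def obj_def)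
    then have le0: "(\<Sum>t<m. (1 / pmf p (om t)) * (cmod (cinner (Wn w n (\<lambda>j. y j - xt j)) (s (om t))))\<^sup>2) \<le> 0"
      using expand[OF ymem] by simp
    let ?\<delta> = "\<lambda>j. y j - xt j"
    have dmem: "?\<delta> \<in> Cn n" using ymem xtmem by (rule Cn_diff)
    have each: "(1 / pmf p (om t)) * (cmod (cinner (Wn w n ?\<delta>) (s (om t))))\<^sup>2 = 0" if t: "t < m" for t
    proof -
      have nn: "\<forall>t\<in>{..<m}. 0 \<le> (1 / pmf p (om t)) * (cmod (cinner (Wn w n ?\<delta>) (s (om t))))\<^sup>2"
        by (simp add: pmf_nonneg)
      have "(\<Sum>t<m. (1 / pmf p (om t)) * (cmod (cinner (Wn w n ?\<delta>) (s (om t))))\<^sup>2) = 0"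
      proof -
        have "0 \<le> (\<Sum>t<m. (1 / pmf p (om t)) * (cmod (cinner (Wn w n ?\<delta>) (s (om t))))\<^sup>2)"
          by (rule sum_nonneg) (simp add: pmf_nonneg)
        then show ?thesis using le0 by linarith
      qed
      then show ?thesis using nn t by (subst (asm) sum_nonneg_eq_0_iff) auto
    qed
    have kd: "kap p m om t * cinner (Wn w n ?\<delta>) (s (om t)) = 0" if t: "t < m" for t
    proof (cases "pmf p (om t) = 0")
      case True then show ?thesis by (simp add: kap_real)
    next
      case False
      then have "cinner (Wn w n ?\<delta>) (s (om t)) = 0" using each[OF t] by simp
      then show ?thesis by simp
    qed
    have "?SH ?\<delta> = (\<lambda>_. 0)"
    proof (rule ext)
      fix i
      have "(\<Sum>t<m. kap p m om t * cinner (Wn w n ?\<delta>) (s (om t)) * cinner (s (om t)) (w i)) = 0"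
        using kd by (intro sum.neutral) simp
      then show "?SH ?\<delta> i = 0" by (simp add: Sigma_hat_apply)
    qed
    then have "?SH ?\<delta> = ?SH (\<lambda>_. 0)" using clin_zero[OF SH_clin] by simp
    then have "?\<delta> = (\<lambda>_. 0)" by (rule inj_onD[OF inj _ dmem zero_in_Cn])
    then show "y = xt" by (simp add: fun_eq_iff)
  qed
  have InvC: "clin n ?Inv" by (rule clin_inv[OF SH_clin inj])
  have blin: "bounded_linear ?L"
  proof -
    have Lform: "?L h = (\<Sum>i<n. \<Sum>t<m. cinner (Pperp w n h) (s (om t)) *\<^sub>C
        ((kap p m om t * cinner (s (om t)) (w i)) *\<^sub>C Wn w n (?Inv (e i))))" for h
    proof -
      have "?Inv (?GH h) = (\<lambda>j. \<Sum>i<n. ?GH h i * ?Inv (e i) j)"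
        using InvC GHmem by (simp add: clin_def)
      then have "?L h = (\<Sum>i<n. ?GH h i *\<^sub>C Wn w n (?Inv (e i)))"
        by (simp add: synth_iota Wn_lincomb)
      also have "\<dots> = (\<Sum>i<n. \<Sum>t<m. cinner (Pperp w n h) (s (om t)) *\<^sub>C
        ((kap p m om t * cinner (s (om t)) (w i)) *\<^sub>C Wn w n (?Inv (e i))))"
        by (intro sum.cong refl) (simp add: Gamma_hat_apply scaleC_sum_left scaleC_scaleC mult_ac)
      finally show ?thesis .
    qed
    have "bounded_linear (\<lambda>h. \<Sum>i<n. \<Sum>t<m. cinner (Pperp w n h) (s (om t)) *\<^sub>C
        ((kap p m om t * cinner (s (om t)) (w i)) *\<^sub>C Wn w n (?Inv (e i))))"
      by (intro bounded_linear_sum bounded_linear_compose[OF bounded_linear_cinner_scaleC Pperp_bounded_linear])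
    then show ?thesis by (simp only: Lform)
  qed
  have Lf: "?L f = Wn w n z" by (simp add: synth_iota z_def)
  have PI: "Pperp w n (Pperp w n f) = Pperp w n f" by (rule Pperp_idem)
  have "?GH (Pperp w n f) = ?GH f" unfolding Gamma_hat_apply PI ..
  then have LP: "?L (Pperp w n f) = ?L f" by simp
  have orth: "cinner (Pperp w n f) (Wn w n z) = 0"
    by (simp add: cinner_Wn_right Pperp_perp_w)
  have diff: "f - synth w (iota n xt) = Pperp w n f - Wn w n z"
    by (simp add: synth_iota xt_def Wn_add Pperp_formula y0_def)
  have "(norm (f - synth w (iota n xt)))\<^sup>2 = (norm (Pperp w n f))\<^sup>2 + (norm (?L (Pperp w n f)))\<^sup>2"
    unfolding diff LP Lf by (rule pythagoras_diff[OF orth])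
  also have "\<dots> \<le> (norm (Pperp w n f))\<^sup>2 + (onorm ?L * norm (Pperp w n f))\<^sup>2"
    using onorm[OF blin, of "Pperp w n f"] by (intro add_left_mono power_mono) auto
  also have "\<dots> = ((norm (Pperp w n f)) * sqrt (1 + (onorm ?L)\<^sup>2))\<^sup>2"
    by (simp add: power_mult_distrib algebra_simps)
  finally have "norm (f - synth w (iota n xt)) \<le> norm (Pperp w n f) * sqrt (1 + (onorm ?L)\<^sup>2)"
    by (rule power2_le_imp_le) simp
  then show ?thesis using sol uniq by blast
qed

end

context sampling
begin

abbreviation v where "v \<equiv> vvec s w n"

lemma R_upper:
  assumes bdd: "bdd_above ((\<lambda>j. (cnorm n (v j))\<^sup>2 / pmf p j) ` set_pmf p)"
  shows "(cnorm n (v j))\<^sup>2 \<le> Rconst s w n p * pmf p j"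
proof (cases "j \<in> set_pmf p")
  case True
  then have pos: "pmf p j > 0" using pmf_positive by (simp add: set_pmf_iff pmf_nonneg order_le_neq_trans)
  have "(cnorm n (v j))\<^sup>2 / pmf p j \<le> Rconst s w n p"
    unfolding Rconst_def by (rule cSUP_upper[OF True bdd])
  then show ?thesis using pos by (simp add: divide_le_eq)
next
  case False
  then have "pmf p j = 0" by (simp add: set_pmf_iff)
  then have "v j = (\<lambda>_. 0)" using A_iii by force
  then show ?thesis by (simp add: cnorm_def \<open>pmf p j = 0\<close>)
qed

lemma lam_bound:
  "summable (\<lambda>j. (cmod (cip n y (v j)))\<^sup>2)"
  "A * C * (cnorm n y)\<^sup>2 \<le> (\<Sum>j. (cmod (cip n y (v j)))\<^sup>2)"
proof -
  show "summable (\<lambda>j. (cmod (cip n y (v j)))\<^sup>2)"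
    using frame_bounds(1)[OF Wn_in_S[of y]] by (simp add: cip_vvec)
  have "A * C * (cnorm n y)\<^sup>2 \<le> A * (norm (Wn w n y))\<^sup>2"
    using riesz_Wn(1)[of y] A_pos by (simp add: mult.assoc)
  also have "\<dots> \<le> (\<Sum>j. (cmod (cinner (Wn w n y) (s j)))\<^sup>2)" by (rule frame_bounds(2)[OF Wn_in_S])
  finally show "A * C * (cnorm n y)\<^sup>2 \<le> (\<Sum>j. (cmod (cip n y (v j)))\<^sup>2)" by (simp add: cip_vvec)
qed

lemma cnorm_proj_expand:
  "(cnorm n (proj n Q x))\<^sup>2 = (\<Sum>k<n. (cmod (cip n (proj n Q (e k)) x))\<^sup>2)"
proof -
  have "(cnorm n (proj n Q x))\<^sup>2 = (\<Sum>k<n. (cmod (cip n (proj n Q x) (e k)))\<^sup>2)"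
    by (simp add: cnorm_sq cip_e_right)
  also have "\<dots> = (\<Sum>k<n. (cmod (cip n (proj n Q (e k)) x))\<^sup>2)"
    by (intro sum.cong refl) (simp add: proj_herm cip_commute[of n x])
  finally show ?thesis .
qed

lemma step_lower:
  assumes Q: "orthonormal n Q"
  shows "summable (\<lambda>j. (cnorm n (proj n Q (v j)))\<^sup>2)"
    "A * C * (real n - real (length Q)) \<le> (\<Sum>j. (cnorm n (proj n Q (v j)))\<^sup>2)"
proof -
  have sk: "summable (\<lambda>j. (cmod (cip n (proj n Q (e k)) (v j)))\<^sup>2)" for k by (rule lam_bound(1))
  show "summable (\<lambda>j. (cnorm n (proj n Q (v j)))\<^sup>2)"
    unfolding cnorm_proj_expand by (rule summable_sum) (rule sk)
  have "A * C * (real n - real (length Q)) = (\<Sum>k<n. A * C * (cnorm n (proj n Q (e k)))\<^sup>2)"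
    by (simp add: trace_proj[OF Q] sum_distrib_left[symmetric])
  also have "\<dots> \<le> (\<Sum>k<n. \<Sum>j. (cmod (cip n (proj n Q (e k)) (v j)))\<^sup>2)"
    by (intro sum_mono lam_bound(2))
  also have "\<dots> = (\<Sum>j. \<Sum>k<n. (cmod (cip n (proj n Q (e k)) (v j)))\<^sup>2)"
    by (rule suminf_sum[symmetric]) (rule sk)
  also have "\<dots> = (\<Sum>j. (cnorm n (proj n Q (v j)))\<^sup>2)" by (simp add: cnorm_proj_expand)
  finally show "A * C * (real n - real (length Q)) \<le> (\<Sum>j. (cnorm n (proj n Q (v j)))\<^sup>2)" .
qed

lemma step_upper:
  assumes Q: "orthonormal n Q" and bdd: "bdd_above ((\<lambda>j. (cnorm n (v j))\<^sup>2 / pmf p j) ` set_pmf p)"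
    and R0: "Rconst s w n p \<ge> 0"
  shows "(\<Sum>j. (cnorm n (proj n Q (v j)))\<^sup>2) \<le> Rconst s w n p * measure_pmf.prob p {j. cnorm n (proj n Q (v j)) \<noteq> 0}"
proof (rule suminf_le_const[OF step_lower(1)[OF Q]])
  fix N
  let ?R = "Rconst s w n p" let ?E = "{j. cnorm n (proj n Q (v j)) \<noteq> 0}"
  have "(\<Sum>j<N. (cnorm n (proj n Q (v j)))\<^sup>2) \<le> (\<Sum>j<N. if j \<in> ?E then ?R * pmf p j else 0)"
  proof (rule sum_mono)
    fix j
    show "(cnorm n (proj n Q (v j)))\<^sup>2 \<le> (if j \<in> ?E then ?R * pmf p j else 0)"
    proof (cases "j \<in> ?E")
      case True
      have "(cnorm n (proj n Q (v j)))\<^sup>2 \<le> (cnorm n (v j))\<^sup>2"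
        using proj_norm[OF Q, of "v j"] by (simp add: sum_nonneg)
      then show ?thesis using True R_upper[OF bdd, of j] by simp
    next
      case False then show ?thesis by simp
    qed
  qed
  also have "\<dots> = ?R * (\<Sum>j\<in>{..<N} \<inter> ?E. pmf p j)"
    by (simp add: sum.If_cases sum_distrib_left Int_def)
  also have "\<dots> = ?R * measure_pmf.prob p ({..<N} \<inter> ?E)"
    by (simp add: measure_measure_pmf_finite)
  also have "\<dots> \<le> ?R * measure_pmf.prob p ?E"
    using R0 by (intro mult_left_mono measure_pmf.finite_measure_mono) auto
  finally show "(\<Sum>j<N. (cnorm n (proj n Q (v j)))\<^sup>2) \<le> ?R * measure_pmf.prob p ?E" .
qed

end

locale sampling2 = sampling s w A B C D n p
  for s w :: "nat \<Rightarrow> 'h::{complex_inner, complete_space}" and A B C D :: real and n :: nat and p +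
  assumes n_pos: "n \<ge> 1"
    and bdd: "bdd_above ((\<lambda>j. (cnorm n (vvec s w n j))\<^sup>2 / pmf p j) ` set_pmf p)"
begin

abbreviation R where "R \<equiv> Rconst s w n p"

lemma R_nonneg: "R \<ge> 0"
proof -
  obtain j where j: "j \<in> set_pmf p" using set_pmf_not_empty[of p] by blast
  have "(cnorm n (v j))\<^sup>2 / pmf p j \<le> R" unfolding Rconst_def by (rule cSUP_upper[OF j bdd])
  moreover have "0 \<le> (cnorm n (v j))\<^sup>2 / pmf p j" by (simp add: pmf_nonneg)
  ultimately show ?thesis by linarith
qed

lemma key_step:
  assumes Q: "orthonormal n Q"
  shows "A * C * (real n - real (length Q)) \<le> R * measure_pmf.prob p {j. cnorm n (proj n Q (v j)) \<noteq> 0}"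
  using step_lower(2)[OF Q] step_upper[OF Q bdd R_nonneg] by linarith

lemma AC_le_R: "A * C \<le> R" and R_pos: "R > 0"
proof -
  have o: "orthonormal n []" by (simp add: orthonormal_def)
  have "A * C * real n \<le> R * measure_pmf.prob p {j. cnorm n (proj n [] (v j)) \<noteq> 0}"
    using key_step[OF o] by simp
  also have "\<dots> \<le> R * 1" using R_nonneg by (intro mult_left_mono) auto
  finally have 1: "A * C * real n \<le> R" by simp
  have "A * C \<le> A * C * real n" using n_pos A_pos C_pos by simp
  then show "A * C \<le> R" using 1 by linarith
  then show "R > 0" using A_pos C_pos by (smt (verit) mult_pos_pos)
qed

definition X :: "(nat \<Rightarrow> nat) \<Rightarrow> nat \<Rightarrow> real" where
  "X om t = real n - real (length (GSQ om t))"

lemma X_nonneg: "X om t \<ge> 0"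
  using orthonormal_length[OF GSQ_orth[of om t]] by (simp add: X_def)

lemma X_le: "X om t \<le> real n" by (simp add: X_def)

lemma GSQ_upd: "t' \<le> t \<Longrightarrow> GSQ (om(t := y)) t' = GSQ om t'"
  by (induction t') (auto simp: GSQ_0 GSQ_Suc)

definition Ev :: "(nat \<Rightarrow> nat) \<Rightarrow> nat \<Rightarrow> nat set" where
  "Ev om t = {j. cnorm n (proj n (GSQ om t) (v j)) \<noteq> 0}"

lemma X_Suc: "X (om(t := y)) (Suc t) = X om t - indicator (Ev om t) y"
  by (simp add: X_def GSQ_Suc GSQ_upd gs_step_def Ev_def indicator_def)

lemma X_Suc_nonneg: "X om t - indicator (Ev om t) y \<ge> 0"
  using X_nonneg[of "om(t := y)" "Suc t"] by (simp add: X_Suc)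

lemma sample_Suc: "sample p (Suc t) = bind_pmf (sample p t) (\<lambda>f. bind_pmf p (\<lambda>y. return_pmf (f(t := y))))"
proof -
  have "{..<Suc t} = insert t {..<t}" by auto
  then have "sample p (Suc t) = Pi_pmf (insert t {..<t}) 0 (\<lambda>_. p)" by (simp add: sample_def)
  also have "\<dots> = do {y \<leftarrow> p; f \<leftarrow> Pi_pmf {..<t} 0 (\<lambda>_. p); return_pmf (f(t := y))}"
    by (rule Pi_pmf_insert') auto
  also have "\<dots> = bind_pmf (sample p t) (\<lambda>f. bind_pmf p (\<lambda>y. return_pmf (f(t := y))))"
    by (subst bind_commute_pmf) (simp add: sample_def)
  finally show ?thesis .
qed

abbreviation q where "q \<equiv> 1 - A * C / R"

lemma q_nonneg: "q \<ge> 0" using AC_le_R R_pos by (simp add: divide_le_eq)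

lemma inner_step: "measure_pmf.expectation p (\<lambda>y. X f t - indicator (Ev f t) y) \<le> q * X f t"
proof -
  have int: "integrable (measure_pmf p) (\<lambda>y. indicator (Ev f t) y :: real)"
    by (rule measure_pmf.integrable_const_bound[where B = 1]) auto
  have "measure_pmf.expectation p (\<lambda>y. X f t - indicator (Ev f t) y) = X f t - measure_pmf.prob p (Ev f t)"
    using int by (simp add: Bochner_Integration.integral_diff)
  also have "\<dots> \<le> q * X f t"
  proof -
    have "A * C * X f t \<le> R * measure_pmf.prob p (Ev f t)"
      using key_step[OF GSQ_orth[of f t]] by (simp add: X_def Ev_def)
    then have "A * C / R * X f t \<le> measure_pmf.prob p (Ev f t)"
      using R_pos by (simp add: divide_le_eq mult.commute mult.left_commute)
    then show ?thesis by (simp add: algebra_simps)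
  qed
  finally show ?thesis .
qed

lemma expect_bound: "(\<integral>\<^sup>+ om. ennreal (X om t) \<partial>sample p t) \<le> ennreal (real n * q ^ t)"
proof (induction t)
  case 0
  have "X (\<lambda>_. 0) 0 = real n" by (simp add: X_def GSQ_0)
  then show ?case by (simp add: sample_def)
next
  case (Suc t)
  have "(\<integral>\<^sup>+ om. ennreal (X om (Suc t)) \<partial>sample p (Suc t))
      = (\<integral>\<^sup>+ f. (\<integral>\<^sup>+ y. ennreal (X f t - indicator (Ev f t) y) \<partial>p) \<partial>sample p t)"
    by (simp add: sample_Suc X_Suc)
  also have "\<dots> \<le> (\<integral>\<^sup>+ f. ennreal q * ennreal (X f t) \<partial>sample p t)"
  proof (rule nn_integral_mono)
    fix f
    have int: "integrable (measure_pmf p) (\<lambda>y. X f t - indicator (Ev f t) y)"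
      by (rule measure_pmf.integrable_const_bound[where B = "real n + 1"])
         (use X_le[of f t] X_nonneg[of f t] in \<open>auto simp: indicator_def\<close>)
    have "(\<integral>\<^sup>+ y. ennreal (X f t - indicator (Ev f t) y) \<partial>p)
        = ennreal (measure_pmf.expectation p (\<lambda>y. X f t - indicator (Ev f t) y))"
      by (rule nn_integral_eq_integral[OF int]) (intro AE_I2 X_Suc_nonneg)
    also have "\<dots> \<le> ennreal (q * X f t)" by (rule ennreal_leI[OF inner_step])
    also have "\<dots> = ennreal q * ennreal (X f t)" by (rule ennreal_mult[OF q_nonneg X_nonneg])
    finally show "(\<integral>\<^sup>+ y. ennreal (X f t - indicator (Ev f t) y) \<partial>p) \<le> ennreal q * ennreal (X f t)" .
  qed
  also have "\<dots> = ennreal q * (\<integral>\<^sup>+ f. ennreal (X f t) \<partial>sample p t)"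
    by (rule nn_integral_cmult) simp
  also have "\<dots> \<le> ennreal q * ennreal (real n * q ^ t)"
    by (rule mult_left_mono[OF Suc.IH]) simp
  also have "\<dots> = ennreal (real n * q ^ Suc t)"
    using q_nonneg by (simp add: ennreal_mult[symmetric] mult_ac)
  finally show ?case .
qed

lemma markov: "measure_pmf.prob (sample p t) {om. X om t \<ge> 1} \<le> real n * q ^ t"
proof -
  have "emeasure (measure_pmf (sample p t)) {om. X om t \<ge> 1}
      = (\<integral>\<^sup>+ om. indicator {om. X om t \<ge> 1} om \<partial>sample p t)" by simp
  also have "\<dots> \<le> (\<integral>\<^sup>+ om. ennreal (X om t) \<partial>sample p t)"
    by (rule nn_integral_mono) (auto simp: indicator_def)
  also have "\<dots> \<le> ennreal (real n * q ^ t)" by (rule expect_bound)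
  finally have "ennreal (measure_pmf.prob (sample p t) {om. X om t \<ge> 1}) \<le> ennreal (real n * q ^ t)"
    by (simp add: measure_pmf.emeasure_eq_measure)
  then show ?thesis using q_nonneg by (simp add: ennreal_le_iff)
qed

lemma good_event:
  assumes "X om m < 1"
  shows "bij_betw (Sigma_hat s w n p m om) (Cn n) (Cn n)"
proof -
  have "length (GSQ om m) \<le> n" by (rule orthonormal_length[OF GSQ_orth])
  then have full: "length (GSQ om m) = n" using assms by (simp add: X_def)
  show ?thesis by (rule clin_bij[OF SH_clin SH_inj[OF full]])
qed

end

context sampling2
begin

lemma numeric:
  assumes d: "0 < \<delta>" "\<delta> < 1"
    and hm: "real m \<ge> 8 / 3 * (B * D) / (A\<^sup>2 * C\<^sup>2) * R * ln (2 * real n / \<delta>)"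
  shows "real n * q ^ m \<le> \<delta>"
proof -
  let ?a = "A * C / R" let ?L = "ln (2 * real n / \<delta>)"
  have Apos: "A > 0" and Cpos: "C > 0" and Rpos: "R > 0" using A_pos C_pos R_pos by auto
  have a_pos: "?a > 0" using Apos Cpos Rpos by simp
  have x_gt: "2 * real n / \<delta> > 1" using d n_pos by (simp add: field_simps)
  have L_nonneg: "?L \<ge> 0" using x_gt by simp
  have BD_AC: "B * D \<ge> A * C" using AB CD Apos Cpos by (intro mult_mono) auto
  have ratio: "(B * D) / (A * C) \<ge> 1" using BD_AC Apos Cpos by simp
  have "real m * ?a \<ge> (8 / 3 * (B * D) / (A\<^sup>2 * C\<^sup>2) * R * ?L) * ?a"
    using hm a_pos by (intro mult_right_mono) auto
  also have "(8 / 3 * (B * D) / (A\<^sup>2 * C\<^sup>2) * R * ?L) * ?a = 8 / 3 * ((B * D) / (A * C)) * ?L"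
    using Apos Cpos Rpos by (simp add: field_simps power2_eq_square)
  also have "8 / 3 * ((B * D) / (A * C)) * ?L \<ge> ?L"
  proof -
    have c1: "1 \<le> 8 / 3 * ((B * D) / (A * C))" using ratio by simp
    have "1 * ?L \<le> (8 / 3 * ((B * D) / (A * C))) * ?L" by (rule mult_right_mono[OF c1 L_nonneg])
    then show ?thesis by (simp only: mult_1_left)
  qed
  finally have maL: "real m * ?a \<ge> ?L" .
  have "q ^ m \<le> exp (- ?a) ^ m"
    using q_nonneg exp_ge_add_one_self[of "- ?a"] by (intro power_mono) auto
  also have "\<dots> = exp (- (real m * ?a))" by (simp add: exp_of_nat_mult[symmetric])
  also have "\<dots> \<le> exp (- ?L)" using maL by simp
  also have "\<dots> = \<delta> / (2 * real n)" using x_gt by (simp add: exp_minus)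
  finally have qm: "q ^ m \<le> \<delta> / (2 * real n)" .
  have "real n * q ^ m \<le> real n * (\<delta> / (2 * real n))" by (rule mult_left_mono[OF qm]) simp
  also have "\<dots> = \<delta> / 2" using n_pos by simp
  also have "\<dots> \<le> \<delta>" using d by simp
  finally show ?thesis .
qed

lemma prob_part:
  assumes d: "0 < \<delta>" "\<delta> < 1"
    and hm: "real m \<ge> 8 / 3 * (B * D) / (A\<^sup>2 * C\<^sup>2) * R * ln (2 * real n / \<delta>)"
  shows "measure_pmf.prob (sample p m)
            {om. bij_betw (Sigma_hat s w n p m om) (Cn n) (Cn n)
               \<and> (\<exists>x. is_wls_solution s w n p m om f x
                    \<and> (\<forall>y. is_wls_solution s w n p m om f y \<longrightarrow> y = x)
                    \<and> norm (f - synth w (iota n x))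
                        \<le> norm (Pperp w n f) * sqrt (1 + (onorm (\<lambda>h. synth w (iota n
                              (inv_into (Cn n) (Sigma_hat s w n p m om) (Gamma_hat s w n p m om h)))))\<^sup>2))}
          \<ge> 1 - \<delta>"
    (is "measure_pmf.prob _ ?E \<ge> _")
proof -
  have sub: "{om. X om m < 1} \<subseteq> ?E"
  proof
    fix om assume "om \<in> {om. X om m < 1}"
    then have b: "bij_betw (Sigma_hat s w n p m om) (Cn n) (Cn n)" using good_event by simp
    show "om \<in> ?E" using b wls_good[OF b, of f] by simp
  qed
  have "measure_pmf.prob (sample p m) {om. X om m < 1} = 1 - measure_pmf.prob (sample p m) {om. X om m \<ge> 1}"
  proof -
    have "{om. X om m < 1} = space (measure_pmf (sample p m)) - {om. X om m \<ge> 1}" by auto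
    then show ?thesis using measure_pmf.prob_compl[where A = "{om. X om m \<ge> 1}" and M = "sample p m"] by simp
  qed
  also have "\<dots> \<ge> 1 - \<delta>" using markov[of m] numeric[OF d hm] by simp
  finally have "1 - \<delta> \<le> measure_pmf.prob (sample p m) {om. X om m < 1}" .
  also have "\<dots> \<le> measure_pmf.prob (sample p m) ?E"
    using sub by (intro measure_pmf.finite_measure_mono) auto
  finally show ?thesis .
qed

end

theorem corollary3p2:
  fixes s w :: "nat \<Rightarrow> 'h::{complex_inner, complete_space}"
    and A B C D :: real and n :: nat and p :: "nat pmf"
  assumes separable: "separable_space (euclidean :: 'h topology)"
    and frame: "is_frame_for_span s A B"
    and riesz: "is_riesz_basis_for_span w C D"
    and n_pos: "n \<ge> 1"
    and A_i: "clspan (range w) \<inter> orth_comp (clspan (range s)) = {0}"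
    and A_ii_R: "bdd_above ((\<lambda>j. (cnorm n (vvec s w n j))\<^sup>2 / pmf p j) ` set_pmf p)"
    and A_ii_R': "bdd_above ((\<lambda>j. (norm (uvec s w n j))\<^sup>2 / pmf p j) ` set_pmf p)"
    and A_iii: "\<And>j. vvec s w n j \<noteq> (\<lambda>_. 0) \<Longrightarrow> pmf p j > 0"
    and W_sub_S: "clspan (range w) \<subseteq> clspan (range s)"
  shows "mat_norm n (Sigma s w n) \<le> B * D
     \<and> bij_betw (Sigma s w n) (Cn n) (Cn n)
     \<and> mat_norm n (inv_into (Cn n) (Sigma s w n)) \<le> 1 / (A * C)
     \<and> mat_norm n (Sigma s w n) * mat_norm n (inv_into (Cn n) (Sigma s w n)) \<le> (B * D) / (A * C)
     \<and> (\<forall>(f::'h) (\<delta>::real) (m::nat). 0 < \<delta> \<and> \<delta> < 1 \<and>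
          real m \<ge> 8 / 3 * (B * D) / (A\<^sup>2 * C\<^sup>2) * Rconst s w n p * ln (2 * real n / \<delta>) \<longrightarrow>
          measure_pmf.prob (sample p m)
            {om. bij_betw (Sigma_hat s w n p m om) (Cn n) (Cn n)
               \<and> (\<exists>x. is_wls_solution s w n p m om f x
                    \<and> (\<forall>y. is_wls_solution s w n p m om f y \<longrightarrow> y = x)
                    \<and> norm (f - synth w (iota n x))
                        \<le> norm (Pperp w n f) * sqrt (1 + (onorm (\<lambda>h. synth w (iota n
                              (inv_into (Cn n) (Sigma_hat s w n p m om) (Gamma_hat s w n p m om h)))))\<^sup>2))}
          \<ge> 1 - \<delta>)"
proof -
  interpret S2: sampling2 s w A B C D n p
    by unfold_locales (use frame riesz W_sub_S A_iii n_pos A_ii_R in auto)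
  show ?thesis using S2.Sigma_facts[OF n_pos] S2.prob_part by blast
qed

end
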